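(* Let $H>0$, $g>0$, and let $\bar\rho$ be a smooth function on $[-H,0]$ for which there exist constants $c^*,c_*>0$ with $c_*\le \bar\rho\le c^*$ and $-\bar\rho'\ge c_*$ on $[-H,0]$. Let $N^2:=-g\bar\rho'/\bar\rho$, and let $(c_n,f_n)_{n\ge1}$ be the eigen-elements of the Sturm–Liouville problem described in the context. Define the operator $M$ on $\ell^2(\mathbb N^* )$ by $(Mu)_n=\sum_{m\ge1}M_{n,m}u_m$ with $$M_{n,m}:=c_nc_m\int_{-H}^0 f_n(r)f_m(r)\bar\rho(r)\,dr .$$ Then there exists $C>0$ such that: (i) $M$ is a bounded linear operator on $\ell^2(\mathbb N^* )$ and $|Mu|_{\ell^2}\le C\,|(c_nu_n)_n|_{\ell^2}$ for all $u\in\ell^2(\mathbb N^* )$; (ii) $M$ is symmetric: $\langle Mu,v\rangle=\langle u,Mv\rangle$ for all $u,v\in\ell^2(\mathbb N^* )$; (iii) $\langle Mu,u\rangle\ge \frac1C |(c_nu_n)_n|_{\ell^2}^2$ for all $u\in\ell^2(\mathbb N^* )$; (iv) consequently $M$ has a unique positive square root $M^{1/2}$ (i.e. $(M^{1/2})^2=M$), and it satisfies $\frac1C|(c_nu_n)_n|_{\ell^2}\le |M^{1/2}u|_{\ell^2}\le C|(c_nu_n)_n|_{\ell^2}$ for all $u\in\ell^2(\mathbb N^* )$; (v) if $N^2$ is constant (independent of $r$), then $M$ is diagonal with $M_{n,n}=c_n^2/N^2$ and $M_{n,m}=0$ for $n\ne m$.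
   Context: $\ell^2(\mathbb N^* )$ is the space of real square-summable sequences indexed by positive integers, with scalar product $\langle u,v\rangle=\sum_n u_nv_n$. For $n\ge1$, $c_n>0$ and $f_n$ are defined by the Sturm–Liouville eigenvalue problem $(\bar\rho f_n')'=-\bar\rho N^2\frac{1}{c_n^2}f_n$ on $(-H,0)$ with $f_n(-H)=f_n(0)=0$, where $(c_n)_{n\ge1}$ is ordered decreasingly and the family $(f_n)_{n\ge1}$ is normalized to be an orthonormal basis of the weighted space $L^2_{\bar\rho N^2}([-H,0])$ (scalar product $\int_{-H}^0 fg\,\bar\rho N^2$). *)

theory Defs
  imports "HOL-Analysis.Analysis"
begin

definition smooth_on :: "real set \<Rightarrow> (real \<Rightarrow> real) \<Rightarrow> bool" where
  "smooth_on S f \<longleftrightarrow> (\<exists>U. open U \<and> S \<subseteq> U \<and>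
      (\<forall>k. \<forall>x\<in>U. ((deriv ^^ k) f) differentiable (at x)))"

definition Nsq :: "real \<Rightarrow> (real \<Rightarrow> real) \<Rightarrow> real \<Rightarrow> real" where
  "Nsq g rho r = - g * deriv rho r / rho r"

definition SL_eigen :: "real \<Rightarrow> (real \<Rightarrow> real) \<Rightarrow> (real \<Rightarrow> real) \<Rightarrow> real \<Rightarrow> (real \<Rightarrow> real) \<Rightarrow> bool" where
  "SL_eigen H rho N2 c f \<longleftrightarrow> c > 0 \<and> continuous_on {-H..0} f \<and> f (-H) = 0 \<and> f 0 = 0 \<and>
     (\<forall>r\<in>{-H<..<0}. f differentiable (at r)) \<and>
     (\<forall>r\<in>{-H<..<0}. ((\<lambda>s. rho s * deriv f s) has_real_derivative
                         (- rho r * N2 r * (1 / c\<^sup>2) * f r)) (at r))"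

definition ONB_weighted :: "real \<Rightarrow> (real \<Rightarrow> real) \<Rightarrow> (nat \<Rightarrow> real \<Rightarrow> real) \<Rightarrow> bool" where
  "ONB_weighted H w f \<longleftrightarrow>
     (\<forall>n\<ge>1. \<forall>m\<ge>1. (LINT r:{-H..0}|lborel. f n r * f m r * w r) = (if n = m then 1 else 0)) \<and>
     (\<forall>h. h \<in> borel_measurable lborel \<longrightarrow>
          set_integrable lborel {-H..0} (\<lambda>r. (h r)\<^sup>2 * w r) \<longrightarrow>
          (\<forall>n\<ge>1. (LINT r:{-H..0}|lborel. h r * f n r * w r) = 0) \<longrightarrow>
          (AE r in lborel. r \<in> {-H..0} \<longrightarrow> h r = 0))"

text \<open>l^2(N^*): real sequences indexed by positive integers, represented as
  functions nat => real vanishing at index 0.\<close>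
definition l2 :: "(nat \<Rightarrow> real) set" where
  "l2 = {u. u 0 = 0 \<and> (\<lambda>n. (u n)\<^sup>2) summable_on {1..}}"

definition l2inner :: "(nat \<Rightarrow> real) \<Rightarrow> (nat \<Rightarrow> real) \<Rightarrow> real" where
  "l2inner u v = (\<Sum>\<^sub>\<infinity>n\<in>{1..}. u n * v n)"

definition l2norm :: "(nat \<Rightarrow> real) \<Rightarrow> real" where
  "l2norm u = sqrt (\<Sum>\<^sub>\<infinity>n\<in>{1..}. (u n)\<^sup>2)"

definition bounded_linear_l2 :: "((nat \<Rightarrow> real) \<Rightarrow> (nat \<Rightarrow> real)) \<Rightarrow> bool" where
  "bounded_linear_l2 T \<longleftrightarrow> (\<forall>u\<in>l2. T u \<in> l2) \<and>
     (\<forall>u\<in>l2. \<forall>v\<in>l2. \<forall>a b. T (\<lambda>n. a * u n + b * v n) = (\<lambda>n. a * T u n + b * T v n)) \<and>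
     (\<exists>B. \<forall>u\<in>l2. l2norm (T u) \<le> B * l2norm u)"

definition positive_l2 :: "((nat \<Rightarrow> real) \<Rightarrow> (nat \<Rightarrow> real)) \<Rightarrow> bool" where
  "positive_l2 T \<longleftrightarrow> bounded_linear_l2 T \<and>
     (\<forall>u\<in>l2. \<forall>v\<in>l2. l2inner (T u) v = l2inner u (T v)) \<and>
     (\<forall>u\<in>l2. l2inner (T u) u \<ge> 0)"

definition Mmat :: "real \<Rightarrow> (real \<Rightarrow> real) \<Rightarrow> (nat \<Rightarrow> real) \<Rightarrow> (nat \<Rightarrow> real \<Rightarrow> real) \<Rightarrow> nat \<Rightarrow> nat \<Rightarrow> real" where
  "Mmat H rho c f n m = c n * c m * (LINT r:{-H..0}|lborel. f n r * f m r * rho r)"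

definition Mop :: "(nat \<Rightarrow> nat \<Rightarrow> real) \<Rightarrow> (nat \<Rightarrow> real) \<Rightarrow> (nat \<Rightarrow> real)" where
  "Mop A u = (\<lambda>n. if n = 0 then 0 else (\<Sum>\<^sub>\<infinity>m\<in>{1..}. A n m * u m))"

end

theory Submission
  imports Defs "HOL-Computational_Algebra.Formal_Power_Series"
begin

definition bco :: "nat \<Rightarrow> real" where
  "bco k = ((1/2) gchoose k) * (-1) ^ k"

definition gco :: "nat \<Rightarrow> real" where
  "gco m = (-1) ^ m * ((-1/2) gchoose m)"

lemma gco_nonneg: "gco m \<ge> 0"
proof -
  have "((-(1/2::real)) gchoose m) = (-1) ^ m * ((1/2 + of_nat m - 1) gchoose m)"
    by (rule gbinomial_minus)
  hence "gco m = ((1/2 + of_nat m - 1) gchoose m)"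
    by (simp add: gco_def)
  also have "\<dots> = (\<Prod>i = 0..<m. ((1/2 + of_nat m - 1) - of_nat i) / of_nat (m - i))"
    by (rule gbinomial_altdef_of_nat)
  also have "\<dots> \<ge> 0"
    by (intro prod_nonneg) (auto simp: of_nat_diff)
  finally show ?thesis .
qed

lemma bco_partial: "(\<Sum>k\<le>m. bco k) = gco m"
  unfolding bco_def gco_def using gbinomial_sum_lower_neg[of "1/2::real" m] by simp

lemma bco_0 [simp]: "bco 0 = 1" by (simp add: bco_def)

lemma bco_Suc: "bco (Suc k) = - gco k / (2 * (real k + 1))"
proof -
  have "of_nat (Suc k) * ((1/2::real) gchoose Suc k) = (1/2) * ((1/2 - 1) gchoose k)"
    by (rule gbinomial_absorption)
  hence "((1/2::real) gchoose Suc k) = ((-1/2) gchoose k) / (2 * (real k + 1))"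
    by (simp add: field_simps)
  thus ?thesis by (simp add: bco_def gco_def)
qed

lemma bco_Suc_nonpos: "bco (Suc k) \<le> 0"
  using gco_nonneg[of k] by (simp add: bco_Suc divide_nonpos_pos)

lemma abs_bco_Suc_partial: "(\<Sum>k<n. \<bar>bco (Suc k)\<bar>) = 1 - gco n"
proof -
  have "(\<Sum>k<n. \<bar>bco (Suc k)\<bar>) = - (\<Sum>k<n. bco (Suc k))"
    using bco_Suc_nonpos by (simp add: sum_negf[symmetric] abs_of_nonpos)
  also have "(\<Sum>k<n. bco (Suc k)) = (\<Sum>k\<le>n. bco k) - bco 0"
    by (simp add: sum.atMost_shift)
  finally show ?thesis by (simp add: bco_partial)
qed

lemma summable_abs_bco_Suc: "summable (\<lambda>k. \<bar>bco (Suc k)\<bar>)"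
  by (rule summableI_nonneg_bounded[where x=1]) (auto simp: abs_bco_Suc_partial gco_nonneg)

lemma suminf_abs_bco_Suc: "(\<Sum>k. \<bar>bco (Suc k)\<bar>) \<le> 1"
  by (rule suminf_le_const[OF summable_abs_bco_Suc]) (simp add: abs_bco_Suc_partial gco_nonneg)

lemma summable_abs_bco: "summable (\<lambda>k. \<bar>bco k\<bar>)"
  using summable_abs_bco_Suc summable_Suc_iff[of "\<lambda>k. \<bar>bco k\<bar>"] by simp

lemma bco_cauchy: "(\<Sum>i\<le>n. bco i * bco (n - i)) = (if n = 0 then 1 else if n = 1 then -1 else 0)"
proof -
  have "(\<Sum>i\<le>n. bco i * bco (n - i)) = (\<Sum>i\<le>n. (-1)^n * (((1/2::real) gchoose i) * ((1/2) gchoose (n - i))))"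
    by (intro sum.cong refl) (auto simp: bco_def power_add[symmetric])
  also have "\<dots> = (-1)^n * (\<Sum>i=0..n. ((1/2::real) gchoose i) * ((1/2) gchoose (n - i)))"
    by (simp add: sum_distrib_left atMost_atLeast0)
  also have "\<dots> = (-1)^n * ((1/2 + 1/2) gchoose n)"
    by (subst gbinomial_Vandermonde) simp
  also have "\<dots> = (-1)^n * (of_nat (1 choose n))"
    by (simp add: binomial_gbinomial)
  finally show ?thesis
    by (cases n) (auto simp: binomial_eq_0)
qed

lemma sum_compose_sum:
  "(sum a A) o\<^sub>L (sum b B) = (\<Sum>i\<in>A. \<Sum>j\<in>B. a i o\<^sub>L b j)"
  by (simp only: bounded_bilinear.sum_left[OF bounded_bilinear_blinfun_compose])
     (simp only: bounded_bilinear.sum_right[OF bounded_bilinear_blinfun_compose])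

lemma Cauchy_product_sums_compose:
  fixes a b :: "nat \<Rightarrow> ('a::banach \<Rightarrow>\<^sub>L 'a)"
  assumes a: "summable (\<lambda>k. norm (a k))"
    and b: "summable (\<lambda>k. norm (b k))"
  shows "(\<lambda>k. \<Sum>i\<le>k. a i o\<^sub>L b (k - i)) sums ((\<Sum>k. a k) o\<^sub>L (\<Sum>k. b k))"
proof -
  let ?S1 = "\<lambda>n::nat. {..<n} \<times> {..<n}"
  let ?S2 = "\<lambda>n::nat. {(i,j). i + j < n}"
  have S1_mono: "\<And>m n. m \<le> n \<Longrightarrow> ?S1 m \<subseteq> ?S1 n" by auto
  have S2_le_S1: "\<And>n. ?S2 n \<subseteq> ?S1 n" by auto
  have S1_le_S2: "\<And>n. ?S1 (n div 2) \<subseteq> ?S2 n" by auto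
  have finite_S1: "\<And>n. finite (?S1 n)" by simp
  with S2_le_S1 have finite_S2: "\<And>n. finite (?S2 n)" by (rule finite_subset)
  let ?g = "\<lambda>(i,j). a i o\<^sub>L b j"
  let ?f = "\<lambda>(i,j). norm (a i) * norm (b j)"
  have f_nonneg: "\<And>x. 0 \<le> ?f x" by auto
  then have norm_sum_f: "\<And>A. norm (sum ?f A) = sum ?f A"
    unfolding real_norm_def
    by (simp only: abs_of_nonneg sum_nonneg [rule_format])
  have "(\<lambda>n. (\<Sum>k<n. a k) o\<^sub>L (\<Sum>k<n. b k)) \<longlonglongrightarrow> ((\<Sum>k. a k) o\<^sub>L (\<Sum>k. b k))"
    by (intro bounded_bilinear.tendsto[OF bounded_bilinear_blinfun_compose]
        summable_LIMSEQ summable_norm_cancel [OF a] summable_norm_cancel [OF b])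
  then have 1: "(\<lambda>n. sum ?g (?S1 n)) \<longlonglongrightarrow> ((\<Sum>k. a k) o\<^sub>L (\<Sum>k. b k))"
    by (simp only: sum_compose_sum sum.Sigma [rule_format] finite_lessThan)
  have "(\<lambda>n. (\<Sum>k<n. norm (a k)) * (\<Sum>k<n. norm (b k))) \<longlonglongrightarrow> (\<Sum>k. norm (a k)) * (\<Sum>k. norm (b k))"
    using a b by (intro tendsto_mult summable_LIMSEQ)
  then have "(\<lambda>n. sum ?f (?S1 n)) \<longlonglongrightarrow> (\<Sum>k. norm (a k)) * (\<Sum>k. norm (b k))"
    by (simp only: sum_product sum.Sigma [rule_format] finite_lessThan)
  then have "convergent (\<lambda>n. sum ?f (?S1 n))"
    by (rule convergentI)
  then have Cauchy: "Cauchy (\<lambda>n. sum ?f (?S1 n))"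
    by (rule convergent_Cauchy)
  have "Zfun (\<lambda>n. sum ?f (?S1 n - ?S2 n)) sequentially"
  proof (rule ZfunI, simp only: eventually_sequentially norm_sum_f)
    fix r :: real
    assume r: "0 < r"
    from CauchyD [OF Cauchy r] obtain N
      where "\<forall>m\<ge>N. \<forall>n\<ge>N. norm (sum ?f (?S1 m) - sum ?f (?S1 n)) < r" ..
    then have "\<And>m n. N \<le> n \<Longrightarrow> n \<le> m \<Longrightarrow> norm (sum ?f (?S1 m - ?S1 n)) < r"
      by (simp only: sum_diff finite_S1 S1_mono)
    then have N: "\<And>m n. N \<le> n \<Longrightarrow> n \<le> m \<Longrightarrow> sum ?f (?S1 m - ?S1 n) < r"
      by (simp only: norm_sum_f)
    show "\<exists>N. \<forall>n\<ge>N. sum ?f (?S1 n - ?S2 n) < r"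
    proof (intro exI allI impI)
      fix n
      assume "2 * N \<le> n"
      then have n: "N \<le> n div 2" by simp
      have "sum ?f (?S1 n - ?S2 n) \<le> sum ?f (?S1 n - ?S1 (n div 2))"
        by (intro sum_mono2 finite_Diff finite_S1 f_nonneg Diff_mono subset_refl S1_le_S2)
      also have "\<dots> < r"
        using n div_le_dividend by (rule N)
      finally show "sum ?f (?S1 n - ?S2 n) < r" .
    qed
  qed
  then have "Zfun (\<lambda>n. sum ?g (?S1 n - ?S2 n)) sequentially"
    apply (rule Zfun_le [rule_format])
    apply (simp only: norm_sum_f)
    apply (rule order_trans [OF norm_sum sum_mono])
    apply (auto simp add: norm_blinfun_compose)
    done
  then have 2: "(\<lambda>n. sum ?g (?S1 n) - sum ?g (?S2 n)) \<longlonglongrightarrow> 0"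
    unfolding tendsto_Zfun_iff diff_0_right
    by (simp only: sum_diff finite_S1 S2_le_S1)
  with 1 have "(\<lambda>n. sum ?g (?S2 n)) \<longlonglongrightarrow> ((\<Sum>k. a k) o\<^sub>L (\<Sum>k. b k))"
    by (rule Lim_transform2)
  then show ?thesis
    by (simp only: sums_def sum.triangle_reindex)
qed

definition opsym :: "('a::real_inner \<Rightarrow>\<^sub>L 'a) \<Rightarrow> bool" where
  "opsym T \<longleftrightarrow> (\<forall>x y. inner (T x) y = inner x (T y))"

definition oppos :: "('a::real_inner \<Rightarrow>\<^sub>L 'a) \<Rightarrow> bool" where
  "oppos T \<longleftrightarrow> opsym T \<and> (\<forall>x. 0 \<le> inner (T x) x)"

lemma pos_cs:
  fixes T :: "'a::real_inner \<Rightarrow>\<^sub>L 'a"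
  assumes T: "oppos T"
  shows "(inner (T x) y)^2 \<le> inner (T x) x * inner (T y) y"
proof -
  define a b c where "a = inner (T x) x" and "b = inner (T x) y" and "c = inner (T y) y"
  have sy: "inner (T y) x = b" using T unfolding oppos_def opsym_def b_def
    by (metis inner_commute)
  have q: "0 \<le> a + 2 * t * b + t^2 * c" for t
  proof -
    have "0 \<le> inner (T (x + t *\<^sub>R y)) (x + t *\<^sub>R y)" using T by (simp add: oppos_def)
    also have "\<dots> = a + 2 * t * b + t^2 * c"
      using sy by (simp add: blinfun.bilinear_simps inner_add_left inner_add_right a_def b_def c_def
          power2_eq_square algebra_simps)
    finally show ?thesis .
  qed
  have a0: "0 \<le> a" "0 \<le> c" using T by (auto simp: oppos_def a_def c_def)
  have "b^2 \<le> a * c"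
  proof (cases "c = 0")
    case True
    have "b = 0"
    proof (rule ccontr)
      assume b: "b \<noteq> 0"
      from q[of "-(a+1)/(2*b)"] True b show False by (simp add: field_simps)
    qed
    thus ?thesis using True by simp
  next
    case False
    hence c: "c > 0" using a0 by simp
    have "0 \<le> c * (a + 2 * (-b/c) * b + (-b/c)^2 * c)" using q[of "-b/c"] c by (intro mult_nonneg_nonneg) auto
    also have "\<dots> = a * c - b^2"
    proof -
      have "c * (a + 2 * (-b/c) * b + (-b/c)^2 * c) = c * a - 2 * (c / c) * b * b + (c/c) * (c/c) * b * b"
        by (simp add: power2_eq_square algebra_simps)
      also have "\<dots> = a * c - b^2" using c by (simp add: power2_eq_square)
      finally show ?thesis .
    qed
    finally show ?thesis by simp
  qed
  thus ?thesis by (simp add: a_def b_def c_def)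
qed

lemma pos_zero:
  fixes T :: "'a::real_inner \<Rightarrow>\<^sub>L 'a"
  assumes T: "oppos T" and z: "inner (T x) x = 0"
  shows "T x = 0"
proof -
  have "(inner (T x) (T x))^2 \<le> 0" using pos_cs[OF T, of x "T x"] z by simp
  hence "inner (T x) (T x) = 0" by simp
  thus ?thesis by simp
qed

lemma pos_contr:
  fixes R :: "'a::real_inner \<Rightarrow>\<^sub>L 'a"
  assumes R: "oppos R" and R1: "oppos (id_blinfun - R)"
  shows "norm (R x) \<le> norm x"
proof -
  have le: "inner (R y) y \<le> (norm y)^2" for y
    using R1 by (simp add: oppos_def blinfun.bilinear_simps inner_diff_left power2_norm_eq_inner)
  have ge: "0 \<le> inner (R y) y" for y using R by (simp add: oppos_def)
  define n where "n = norm (R x)"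
  have n2: "n^2 = inner (R x) (R x)" by (simp add: n_def power2_norm_eq_inner)
  have "n^2 * n^2 = (inner (R x) (R x))^2" unfolding n2 by (simp add: power2_eq_square)
  also have "\<dots> \<le> inner (R x) x * inner (R (R x)) (R x)" by (rule pos_cs[OF R])
  also have "\<dots> \<le> (norm x)^2 * n^2"
    by (rule mult_mono) (use le ge n_def in auto)
  finally have *: "n^2 * n^2 \<le> (norm x)^2 * n^2" .
  show ?thesis
  proof (cases "n = 0")
    case True thus ?thesis by (simp add: n_def)
  next
    case False
    hence "n^2 > 0" by simp
    with * have "n^2 \<le> (norm x)^2" using mult_right_le_imp_le by blast
    thus ?thesis unfolding n_def by (simp add: power_mono_iff)
  qed
qed

primrec opow :: "('a::real_normed_vector \<Rightarrow>\<^sub>L 'a) \<Rightarrow> nat \<Rightarrow> ('a \<Rightarrow>\<^sub>L 'a)" where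
  "opow R 0 = id_blinfun"
| "opow R (Suc k) = R o\<^sub>L opow R k"

lemma opow_add_apply: "opow R (i + j) x = opow R i (opow R j x)"
  by (induction i) auto

lemma opow_add: "opow R i o\<^sub>L opow R j = opow R (i + j)"
  by (rule blinfun_eqI) (simp add: opow_add_apply)

lemma opow_comm_apply: "opow R k (R x) = R (opow R k x)"
  by (induction k) auto

lemma opow_norm:
  assumes "norm R \<le> 1"
  shows "norm (opow R k) \<le> 1"
proof (induction k)
  case 0 thus ?case by (simp add: norm_blinfun_id_le)
next
  case (Suc k)
  have "norm (R o\<^sub>L opow R k) \<le> norm R * norm (opow R k)" by (rule norm_blinfun_compose)
  also have "\<dots> \<le> 1 * 1" by (rule mult_mono) (use assms Suc in auto)
  finally show ?case by simp
qed

lemma opow_sym: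
  fixes R :: "'a::real_inner \<Rightarrow>\<^sub>L 'a"
  assumes "opsym R"
  shows "opsym (opow R k)"
proof (induction k)
  case 0 thus ?case by (simp add: opsym_def)
next
  case (Suc k)
  show ?case unfolding opsym_def opow.simps
  proof (intro allI)
    fix x y
    have "inner ((R o\<^sub>L opow R k) x) y = inner (opow R k x) (R y)"
      using assms by (simp add: opsym_def)
    also have "\<dots> = inner x (opow R k (R y))" using Suc by (simp add: opsym_def)
    also have "\<dots> = inner x ((R o\<^sub>L opow R k) y)" by (simp add: opow_comm_apply)
    finally show "inner ((R o\<^sub>L opow R k) x) y = inner x ((R o\<^sub>L opow R k) y)" .
  qed
qed

lemma opow_commute:
  assumes "X o\<^sub>L R = R o\<^sub>L X"
  shows "X o\<^sub>L opow R k = opow R k o\<^sub>L X"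
proof (induction k)
  case 0 thus ?case by (auto intro: blinfun_eqI)
next
  case (Suc k)
  have "X o\<^sub>L (R o\<^sub>L opow R k) = (X o\<^sub>L R) o\<^sub>L opow R k" by (auto intro: blinfun_eqI)
  also have "\<dots> = R o\<^sub>L (X o\<^sub>L opow R k)" using assms by (auto intro: blinfun_eqI)
  also have "\<dots> = (R o\<^sub>L opow R k) o\<^sub>L X" using Suc by (auto intro: blinfun_eqI)
  finally show ?case by simp
qed

lemma bl_apply_inner: "bounded_linear (\<lambda>Y::'a::real_inner \<Rightarrow>\<^sub>L 'a. inner (Y x) y)"
  by (rule bounded_linear_compose[OF bounded_linear_inner_left
        bounded_bilinear.bounded_linear_left[OF bounded_bilinear_blinfun_apply]])

lemma bl_apply_inner2: "bounded_linear (\<lambda>Y::'a::real_inner \<Rightarrow>\<^sub>L 'a. inner x (Y y))"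
  by (rule bounded_linear_compose[OF bounded_linear_inner_right
        bounded_bilinear.bounded_linear_left[OF bounded_bilinear_blinfun_apply]])


lemma sqrt_exists:
  fixes T :: "'a::{real_inner,banach} \<Rightarrow>\<^sub>L 'a"
  assumes T: "oppos T"
  shows "\<exists>S. oppos S \<and> S o\<^sub>L S = T \<and> (\<forall>X. X o\<^sub>L T = T o\<^sub>L X \<longrightarrow> X o\<^sub>L S = S o\<^sub>L X)"
proof -
  define l where "l = norm T + 1"
  have l0: "l > 0" by (simp add: l_def add_nonneg_pos)
  define R where "R = id_blinfun - (1/l) *\<^sub>R T"
  have Rapp: "R x = x - (1/l) *\<^sub>R T x" for x by (simp add: R_def blinfun.bilinear_simps)
  have Tsym: "inner (T x) y = inner x (T y)" for x y using T by (simp add: oppos_def opsym_def)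
  have Tle: "inner (T x) x \<le> l * (norm x)^2" for x
  proof -
    have "inner (T x) x \<le> norm (T x) * norm x" by (rule norm_cauchy_schwarz)
    also have "\<dots> \<le> (norm T * norm x) * norm x" by (intro mult_right_mono norm_blinfun) simp
    also have "\<dots> \<le> l * (norm x)^2" by (simp add: l_def power2_eq_square algebra_simps)
    finally show ?thesis .
  qed
  have Rpos: "oppos R"
    unfolding oppos_def opsym_def
  proof (intro conjI allI)
    fix x y
    show "inner (R x) y = inner x (R y)"
      by (simp add: Rapp inner_diff_left inner_diff_right Tsym)
    have "(1/l) * inner (T x) x \<le> (1/l) * (l * (norm x)^2)"
      using Tle[of x] l0 by (intro mult_left_mono) auto
    thus "0 \<le> inner (R x) x" using l0
      by (simp add: Rapp inner_diff_left power2_norm_eq_inner)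
  qed
  have IRpos: "oppos (id_blinfun - R)"
    unfolding oppos_def opsym_def
  proof (intro conjI allI)
    fix x y
    show "inner ((id_blinfun - R) x) y = inner x ((id_blinfun - R) y)"
      by (simp add: Rapp blinfun.bilinear_simps Tsym)
    show "0 \<le> inner ((id_blinfun - R) x) x"
      using T l0 by (simp add: Rapp blinfun.bilinear_simps oppos_def)
  qed
  have nR: "norm R \<le> 1"
    by (rule norm_blinfun_bound) (use pos_contr[OF Rpos IRpos] in auto)
  have nRk: "norm (opow R k) \<le> 1" for k by (rule opow_norm[OF nR])
  define a where "a k = bco k *\<^sub>R opow R k" for k
  have na: "norm (a k) \<le> \<bar>bco k\<bar>" for k
  proof -
    have "norm (a k) = \<bar>bco k\<bar> * norm (opow R k)" by (simp add: a_def)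
    also have "\<dots> \<le> \<bar>bco k\<bar> * 1" by (intro mult_left_mono nRk) simp
    finally show ?thesis by simp
  qed
  have suma: "summable (\<lambda>k. norm (a k))"
    by (rule summable_comparison_test'[OF summable_abs_bco]) (use na in auto)
  define P where "P = (\<Sum>k. a k)"
  have PP: "P o\<^sub>L P = id_blinfun - R"
  proof -
    have cs: "(\<lambda>k. \<Sum>i\<le>k. a i o\<^sub>L a (k - i)) sums (P o\<^sub>L P)"
      unfolding P_def by (rule Cauchy_product_sums_compose[OF suma suma])
    have eq: "(\<Sum>i\<le>k. a i o\<^sub>L a (k - i)) = (if k = 0 then 1 else if k = 1 then -1 else 0) *\<^sub>R opow R k" for k
    proof -
      have "(\<Sum>i\<le>k. a i o\<^sub>L a (k - i)) = (\<Sum>i\<le>k. (bco i * bco (k - i)) *\<^sub>R opow R k)"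
      proof (intro sum.cong refl)
        fix i assume "i \<in> {..k}"
        hence "i + (k - i) = k" by simp
        thus "a i o\<^sub>L a (k - i) = (bco i * bco (k - i)) *\<^sub>R opow R k"
          unfolding a_def using opow_add[of R i "k - i"]
          by (simp add: blinfun.bilinear_simps bounded_bilinear.scaleR_left[OF bounded_bilinear_blinfun_compose]
              bounded_bilinear.scaleR_right[OF bounded_bilinear_blinfun_compose])
      qed
      also have "\<dots> = (\<Sum>i\<le>k. bco i * bco (k - i)) *\<^sub>R opow R k"
        by (simp add: scaleR_sum_left)
      finally show ?thesis by (simp only: bco_cauchy)
    qed
    have fs: "(\<lambda>k. (if k = 0 then 1 else if k = 1 then -1 else 0) *\<^sub>R opow R k) sums
        (\<Sum>k\<in>{0,1}. (if k = 0 then 1 else if k = 1 then -1 else 0) *\<^sub>R opow R k)"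
      by (rule sums_finite) auto
    have "(\<Sum>k\<in>{0,1::nat}. (if k = 0 then 1 else if k = 1 then -1 else 0) *\<^sub>R opow R k) = id_blinfun - R"
      by (auto intro!: blinfun_eqI simp: blinfun.bilinear_simps)
    have cs2: "(\<lambda>k. (if k = 0 then 1 else if k = 1 then -1 else 0) *\<^sub>R opow R k) sums (P o\<^sub>L P)"
      using cs by (simp only: eq)
    have Rid: "R o\<^sub>L id_blinfun = R" by (auto intro: blinfun_eqI)
    from sums_unique2[OF cs2 fs] this show ?thesis by (simp add: Rid)
  qed
  define S where "S = sqrt l *\<^sub>R P"
  have SS: "S o\<^sub>L S = T"
  proof -
    have "S o\<^sub>L S = (sqrt l * sqrt l) *\<^sub>R (P o\<^sub>L P)"
      by (simp add: S_def bounded_bilinear.scaleR_left[OF bounded_bilinear_blinfun_compose]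
              bounded_bilinear.scaleR_right[OF bounded_bilinear_blinfun_compose])
    also have "\<dots> = T" using l0 by (auto intro!: blinfun_eqI simp: PP Rapp blinfun.bilinear_simps)
    finally show ?thesis .
  qed
  have comm: "X o\<^sub>L S = S o\<^sub>L X" if XT: "X o\<^sub>L T = T o\<^sub>L X" for X
  proof -
    have "X (T x) = T (X x)" for x using arg_cong[OF XT, of "\<lambda>F. F x"] by simp
    hence "X o\<^sub>L R = R o\<^sub>L X" by (auto intro!: blinfun_eqI simp: Rapp blinfun.bilinear_simps)
    hence XR: "X o\<^sub>L opow R k = opow R k o\<^sub>L X" for k by (rule opow_commute)
    have sa: "summable a" using suma by (rule summable_norm_cancel)
    have "X o\<^sub>L P = (\<Sum>k. X o\<^sub>L a k)"
      unfolding P_def by (rule bounded_linear.suminf[OF bounded_bilinear.bounded_linear_right[OF bounded_bilinear_blinfun_compose] sa])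
    also have "\<dots> = (\<Sum>k. a k o\<^sub>L X)"
      by (simp add: a_def XR bounded_bilinear.scaleR_left[OF bounded_bilinear_blinfun_compose]
              bounded_bilinear.scaleR_right[OF bounded_bilinear_blinfun_compose])
    also have "\<dots> = P o\<^sub>L X"
      unfolding P_def by (rule bounded_linear.suminf[OF bounded_bilinear.bounded_linear_left[OF bounded_bilinear_blinfun_compose] sa, symmetric])
    finally have "X o\<^sub>L P = P o\<^sub>L X" .
    thus ?thesis
      by (simp add: S_def bounded_bilinear.scaleR_left[OF bounded_bilinear_blinfun_compose]
              bounded_bilinear.scaleR_right[OF bounded_bilinear_blinfun_compose])
  qed
  have sa: "summable a" using suma by (rule summable_norm_cancel)
  have aeq: "a = (\<lambda>k. bco k *\<^sub>R opow R k)" by (rule ext) (simp add: a_def)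
  have Pin: "inner (P x) y = (\<Sum>k. bco k * inner (opow R k x) y)" for x y
    unfolding P_def using bounded_linear.suminf[OF bl_apply_inner sa, of x y]
    by (simp add: aeq blinfun.bilinear_simps)
  have Pin2: "inner x (P y) = (\<Sum>k. bco k * inner x (opow R k y))" for x y
    unfolding P_def using bounded_linear.suminf[OF bl_apply_inner2 sa, of x y]
    by (simp add: aeq blinfun.bilinear_simps)
  have Rsym: "opsym (opow R k)" for k using Rpos by (intro opow_sym) (simp add: oppos_def)
  have Ppos: "oppos P"
    unfolding oppos_def opsym_def
  proof (intro conjI allI)
    fix x y
    show "inner (P x) y = inner x (P y)"
      unfolding Pin Pin2 using Rsym by (simp add: opsym_def)
    let ?t = "\<lambda>k. bco k * inner (opow R k x) x"
    have tb: "\<bar>inner (opow R k x) x\<bar> \<le> (norm x)^2" for k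
    proof -
      have "\<bar>inner (opow R k x) x\<bar> \<le> norm (opow R k x) * norm x" by (rule Cauchy_Schwarz_ineq2)
      also have "\<dots> \<le> (norm (opow R k) * norm x) * norm x" by (intro mult_right_mono norm_blinfun) simp
      also have "\<dots> \<le> (1 * norm x) * norm x" by (intro mult_right_mono nRk) simp_all
      finally show ?thesis by (simp add: power2_eq_square)
    qed
    have st: "summable ?t"
    proof (rule summable_comparison_test'[where g="\<lambda>k. \<bar>bco k\<bar> * (norm x)^2"])
      show "summable (\<lambda>k. \<bar>bco k\<bar> * (norm x)^2)" by (rule summable_mult2[OF summable_abs_bco])
      fix k
      show "norm (?t k) \<le> \<bar>bco k\<bar> * (norm x)^2"
        unfolding real_norm_def abs_mult by (rule mult_left_mono[OF tb]) simp
    qed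
    have st1: "summable (\<lambda>k. ?t (Suc k))" using st summable_Suc_iff[of ?t] by simp
    have "(\<Sum>k. - (\<bar>bco (Suc k)\<bar> * (norm x)^2)) \<le> (\<Sum>k. ?t (Suc k))"
    proof (rule suminf_le)
      fix k
      have "\<bar>?t (Suc k)\<bar> \<le> \<bar>bco (Suc k)\<bar> * (norm x)^2"
        using tb[of "Suc k"] by (simp add: abs_mult mult_left_mono)
      thus "- (\<bar>bco (Suc k)\<bar> * (norm x)^2) \<le> ?t (Suc k)" by linarith
      show "summable (\<lambda>k. - (\<bar>bco (Suc k)\<bar> * (norm x)^2))"
        by (intro summable_minus summable_mult2 summable_abs_bco_Suc)
    qed (rule st1)
    also have "(\<Sum>k. ?t (Suc k)) = inner (P x) x - inner x x"
      using suminf_split_head[OF st] by (simp add: Pin)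
    finally have "inner (P x) x \<ge> inner x x - (\<Sum>k. \<bar>bco (Suc k)\<bar> * (norm x)^2)"
      by (simp add: suminf_minus[OF summable_mult2[OF summable_abs_bco_Suc]])
    moreover have "(\<Sum>k. \<bar>bco (Suc k)\<bar> * (norm x)^2) \<le> inner x x"
    proof -
      have "(\<Sum>k. \<bar>bco (Suc k)\<bar> * (norm x)^2) = (\<Sum>k. \<bar>bco (Suc k)\<bar>) * (norm x)^2"
        by (rule suminf_mult2[OF summable_abs_bco_Suc, symmetric])
      also have "\<dots> \<le> 1 * (norm x)^2" by (intro mult_right_mono suminf_abs_bco_Suc) simp
      finally show ?thesis by (simp add: power2_norm_eq_inner)
    qed
    ultimately show "0 \<le> inner (P x) x" by linarith
  qed
  have Spos: "oppos S"
    using Ppos l0 by (auto simp: oppos_def opsym_def S_def blinfun.bilinear_simps inner_commute)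
  show ?thesis using Spos SS comm by blast
qed

lemma sqrt_unique:
  fixes S S' :: "'a::real_inner \<Rightarrow>\<^sub>L 'a"
  assumes S: "oppos S" and S': "oppos S'" and eq: "S' o\<^sub>L S' = S o\<^sub>L S"
    and comm: "\<forall>X. X o\<^sub>L (S o\<^sub>L S) = (S o\<^sub>L S) o\<^sub>L X \<longrightarrow> X o\<^sub>L S = S o\<^sub>L X"
  shows "S' = S"
proof -
  have "S' o\<^sub>L (S o\<^sub>L S) = (S o\<^sub>L S) o\<^sub>L S'"
    unfolding eq[symmetric] by (auto intro: blinfun_eqI)
  hence c: "S' o\<^sub>L S = S o\<^sub>L S'" using comm by blast
  have c': "S' (S x) = S (S' x)" for x using arg_cong[OF c, of "\<lambda>F. F x"] by simp
  have e: "S' (S' x) = S (S x)" for x using arg_cong[OF eq, of "\<lambda>F. F x"] by simp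
  show ?thesis
  proof (rule blinfun_eqI)
    fix x
    define y where "y = S x - S' x"
    have "S y + S' y = 0"
      by (simp add: y_def blinfun.bilinear_simps c' e)
    hence "inner (S y) y + inner (S' y) y = 0"
      by (metis inner_add_left inner_zero_left)
    moreover have "inner (S y) y \<ge> 0" "inner (S' y) y \<ge> 0" using S S' by (auto simp: oppos_def)
    ultimately have "inner (S y) y = 0" "inner (S' y) y = 0" by linarith+
    hence "S y = 0" "S' y = 0" using pos_zero S S' by blast+
    hence Wy: "S y - S' y = 0" by simp
    have "inner y y = inner (S x - S' x) y" by (simp add: y_def)
    also have "\<dots> = inner x (S y - S' y)"
      using S S' by (simp add: inner_diff_left inner_diff_right oppos_def opsym_def)
    also have "\<dots> = 0" using Wy by simp
    finally have "y = 0" by simp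
    thus "S' x = S x" by (simp add: y_def)
  qed
qed


lemma l2_iff: "u \<in> l2 \<longleftrightarrow> u 0 = 0 \<and> summable (\<lambda>n. (u n)^2)"
proof -
  have "u 0 = 0 \<Longrightarrow> ((\<lambda>n. (u n)^2) summable_on {1..} \<longleftrightarrow> (\<lambda>n. (u n)^2) summable_on UNIV)"
    by (rule summable_on_cong_neutral) (auto simp: not_le)
  thus ?thesis unfolding l2_def
    using summable_on_UNIV_nonneg_real_iff[of "\<lambda>n. (u n)^2"] by auto
qed

lemma infsum_conv:
  fixes f :: "nat \<Rightarrow> real"
  assumes f0: "f 0 = 0" and s: "summable (\<lambda>n. \<bar>f n\<bar>)"
  shows "f summable_on {1..}" "infsum f {1..} = suminf f"
proof -
  have s': "summable (\<lambda>n. norm (f n))" using s by simp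
  have hs: "(f has_sum suminf f) UNIV"
    by (rule norm_summable_imp_has_sum[OF s']) (rule summable_sums[OF summable_norm_cancel[OF s']])
  have "(f has_sum suminf f) {1..} \<longleftrightarrow> (f has_sum suminf f) UNIV"
    by (rule has_sum_cong_neutral) (use f0 in \<open>auto simp: not_le\<close>)
  with hs have "(f has_sum suminf f) {1..}" by simp
  thus "f summable_on {1..}" "infsum f {1..} = suminf f"
    by (auto simp: summable_on_def infsumI)
qed

lemma abs_prod_le: "\<bar>(a::real) * b\<bar> \<le> a^2 + b^2"
proof -
  have "0 \<le> (\<bar>a\<bar> - \<bar>b\<bar>)^2" by simp
  hence "2 * \<bar>a\<bar> * \<bar>b\<bar> \<le> a^2 + b^2" by (simp add: power2_eq_square algebra_simps)
  moreover have "0 \<le> \<bar>a\<bar> * \<bar>b\<bar>" by simp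
  moreover have "2 * \<bar>a\<bar> * \<bar>b\<bar> = 2 * (\<bar>a\<bar> * \<bar>b\<bar>)" by simp
  ultimately have "\<bar>a\<bar> * \<bar>b\<bar> \<le> a^2 + b^2" by linarith
  thus ?thesis by (simp add: abs_mult)
qed

lemma l2_prod_summable:
  assumes "u \<in> l2" "v \<in> l2"
  shows "summable (\<lambda>n. \<bar>u n * v n\<bar>)"
proof (rule summable_comparison_test'[where g="\<lambda>n. (u n)^2 + (v n)^2"])
  show "summable (\<lambda>n. (u n)^2 + (v n)^2)" using assms by (intro summable_add) (auto simp: l2_iff)
qed (simp add: abs_prod_le)

lemma l2_inner_eq: "u \<in> l2 \<Longrightarrow> v \<in> l2 \<Longrightarrow> l2inner u v = (\<Sum>n. u n * v n)"
  unfolding l2inner_def by (rule infsum_conv(2)) (auto simp: l2_iff intro: l2_prod_summable)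

lemma l2_norm_eq: "u \<in> l2 \<Longrightarrow> l2norm u = sqrt (\<Sum>n. (u n)^2)"
  unfolding l2norm_def by (subst infsum_conv(2)) (auto simp: l2_iff)

lemma l2_add: "u \<in> l2 \<Longrightarrow> v \<in> l2 \<Longrightarrow> (\<lambda>n. u n + v n) \<in> l2"
  unfolding l2_iff
proof (intro conjI)
  assume a: "u 0 = 0 \<and> summable (\<lambda>n. (u n)\<^sup>2)" "v 0 = 0 \<and> summable (\<lambda>n. (v n)\<^sup>2)"
  thus "u 0 + v 0 = 0" by simp
  show "summable (\<lambda>n. (u n + v n)^2)"
  proof (rule summable_comparison_test'[where g="\<lambda>n. 2 * (u n)^2 + 2 * (v n)^2"])
    show "summable (\<lambda>n. 2 * (u n)^2 + 2 * (v n)^2)" using a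
      by (intro summable_add summable_mult) auto
    fix n
    have "0 \<le> (u n - v n)^2" by simp
    hence "(u n + v n)^2 \<le> 2 * (u n)^2 + 2 * (v n)^2"
      by (simp add: power2_eq_square algebra_simps)
    thus "norm ((u n + v n)^2) \<le> 2 * (u n)^2 + 2 * (v n)^2" by simp
  qed
qed

lemma l2_scale: "u \<in> l2 \<Longrightarrow> (\<lambda>n. a * u n) \<in> l2"
  unfolding l2_iff by (auto simp: power_mult_distrib intro: summable_mult)

lemma l2_zero: "(\<lambda>n. 0) \<in> l2" unfolding l2_iff by simp

lemma l2_lincomb: "u \<in> l2 \<Longrightarrow> v \<in> l2 \<Longrightarrow> (\<lambda>n. a * u n + b * v n) \<in> l2"
  using l2_add l2_scale by blast

typedef ell = l2 morphisms el mkell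
  using l2_zero by blast

setup_lifting type_definition_ell

instantiation ell :: real_vector
begin
lift_definition zero_ell :: ell is "\<lambda>n. 0" by (rule l2_zero)
lift_definition plus_ell :: "ell \<Rightarrow> ell \<Rightarrow> ell" is "\<lambda>u v n. u n + v n" by (rule l2_add)
lift_definition uminus_ell :: "ell \<Rightarrow> ell" is "\<lambda>u n. - u n"
  using l2_scale[of _ "-1"] by simp
lift_definition minus_ell :: "ell \<Rightarrow> ell \<Rightarrow> ell" is "\<lambda>u v n. u n - v n"
  using l2_lincomb[of _ _ 1 "-1"] by simp
lift_definition scaleR_ell :: "real \<Rightarrow> ell \<Rightarrow> ell" is "\<lambda>a u n. a * u n" by (rule l2_scale)
instance
  by intro_classes (transfer; auto simp: algebra_simps)+
end

lemma el_in: "el x \<in> l2" by (rule el)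

lemma el_sq_summable: "summable (\<lambda>n. (el x n)^2)" using el_in[of x] by (simp add: l2_iff)

lemma el_prod_summable: "summable (\<lambda>n. el x n * el y n)"
  by (rule summable_rabs_cancel[OF l2_prod_summable[OF el_in el_in]])

instantiation ell :: real_inner
begin
lift_definition inner_ell :: "ell \<Rightarrow> ell \<Rightarrow> real" is "\<lambda>u v. \<Sum>n. u n * v n" .
definition norm_ell :: "ell \<Rightarrow> real" where "norm_ell x = sqrt (inner x x)"
definition sgn_ell :: "ell \<Rightarrow> ell" where "sgn_ell x = x /\<^sub>R norm x"
definition dist_ell :: "ell \<Rightarrow> ell \<Rightarrow> real" where "dist_ell x y = norm (x - y)"
definition uniformity_ell :: "(ell \<times> ell) filter" where
  "uniformity_ell = (INF e\<in>{0<..}. principal {(x, y). dist x y < e})"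
definition open_ell :: "ell set \<Rightarrow> bool" where
  "open_ell U = (\<forall>x\<in>U. \<forall>\<^sub>F (x', y) in uniformity. x' = x \<longrightarrow> y \<in> U)"
instance
proof
  fix x y z :: ell and r :: real
  show "inner x y = inner y x" by transfer (simp add: mult.commute)
  show "inner (x + y) z = inner x z + inner y z"
    by (simp add: inner_ell.rep_eq plus_ell.rep_eq distrib_right suminf_add[OF el_prod_summable el_prod_summable])
  show "inner (r *\<^sub>R x) y = r * inner x y"
    by (simp add: inner_ell.rep_eq scaleR_ell.rep_eq mult.assoc suminf_mult[OF el_prod_summable])
  show "0 \<le> inner x x"
    by (simp add: inner_ell.rep_eq suminf_nonneg[OF el_prod_summable])
  show "inner x x = 0 \<longleftrightarrow> x = 0"
  proof -
    have "inner x x = 0 \<longleftrightarrow> (\<forall>n. el x n * el x n = 0)"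
      unfolding inner_ell.rep_eq by (rule suminf_eq_zero_iff[OF el_prod_summable]) simp
    also have "\<dots> \<longleftrightarrow> el x = el 0" by (auto simp: zero_ell.rep_eq)
    also have "\<dots> \<longleftrightarrow> x = 0" by (simp add: el_inject)
    finally show ?thesis .
  qed
  show "norm x = sqrt (inner x x)" by (simp add: norm_ell_def)
  show "sgn x = x /\<^sub>R norm x" by (rule sgn_ell_def)
  show "dist x y = norm (x - y)" by (rule dist_ell_def)
  show "(uniformity :: (ell \<times> ell) filter) = (INF e\<in>{0<..}. principal {(x, y). dist x y < e})"
    by (rule uniformity_ell_def)
  show "open U \<longleftrightarrow> (\<forall>x\<in>U. \<forall>\<^sub>F (x', y) in uniformity. x' = x \<longrightarrow> y \<in> U)" for U :: "ell set"
    by (rule open_ell_def)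
qed
end

lemma inner_ell_eq: "inner x y = l2inner (el x) (el y)"
  by (simp add: inner_ell.rep_eq l2_inner_eq el_in)

lemma norm_ell_eq: "norm x = l2norm (el x)"
  by (simp add: norm_eq_sqrt_inner inner_ell.rep_eq l2_norm_eq el_in power2_eq_square)

lemma norm_ell_sq: "(norm x)^2 = (\<Sum>n. (el x n)^2)"
proof -
  have "(norm x)^2 = inner x x" by (rule power2_norm_eq_inner)
  thus ?thesis by (simp add: inner_ell.rep_eq power2_eq_square)
qed

lemma el_coord_le: "\<bar>el x n\<bar> \<le> norm x"
proof -
  have "(el x n)^2 = sum (\<lambda>n. (el x n)^2) {n}" by simp
  also have "\<dots> \<le> (\<Sum>n. (el x n)^2)" by (rule sum_le_suminf[OF el_sq_summable]) auto
  finally have "(el x n)^2 \<le> (norm x)^2" by (simp add: norm_ell_sq)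
  thus ?thesis using abs_le_square_iff[of "el x n" "norm x"] by simp
qed

instance ell :: complete_space
proof
  fix X :: "nat \<Rightarrow> ell"
  assume C: "Cauchy X"
  have Cn: "Cauchy (\<lambda>k. el (X k) n)" for n
  proof (rule metric_CauchyI)
    fix e :: real assume "e > 0"
    then obtain M where M: "\<forall>m\<ge>M. \<forall>k\<ge>M. norm (X m - X k) < e"
      using C unfolding Cauchy_iff by blast
    show "\<exists>M. \<forall>m\<ge>M. \<forall>k\<ge>M. dist (el (X m) n) (el (X k) n) < e"
    proof (intro exI allI impI)
      fix m k assume "M \<le> m" "M \<le> k"
      have "dist (el (X m) n) (el (X k) n) = \<bar>el (X m - X k) n\<bar>"
        by (simp add: dist_real_def minus_ell.rep_eq)
      also have "\<dots> \<le> norm (X m - X k)" by (rule el_coord_le)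
      also have "\<dots> < e" using M \<open>M \<le> m\<close> \<open>M \<le> k\<close> by blast
      finally show "dist (el (X m) n) (el (X k) n) < e" .
    qed
  qed
  define v where "v n = lim (\<lambda>k. el (X k) n)" for n
  have vlim: "(\<lambda>k. el (X k) n) \<longlonglongrightarrow> v n" for n
    unfolding v_def using Cn[of n] by (simp add: Cauchy_convergent_iff convergent_LIMSEQ_iff)
  have v0: "v 0 = 0"
  proof -
    have "(\<lambda>k. el (X k) 0) \<longlonglongrightarrow> 0" using el_in by (simp add: l2_iff)
    thus ?thesis using vlim[of 0] LIMSEQ_unique by blast
  qed
  have key: "\<exists>K. \<forall>k\<ge>K. summable (\<lambda>n. (el (X k) n - v n)^2) \<and> (\<Sum>n. (el (X k) n - v n)^2) \<le> e^2"
    if e: "e > 0" for e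
  proof -
    obtain K where K: "\<forall>m\<ge>K. \<forall>k\<ge>K. norm (X m - X k) < e"
      using C e unfolding Cauchy_iff by blast
    show ?thesis
    proof (intro exI allI impI)
      fix k assume k: "K \<le> k"
      have ps: "(\<Sum>n<N. (el (X k) n - v n)^2) \<le> e^2" for N
      proof -
        have lim: "(\<lambda>l. \<Sum>n<N. (el (X k) n - el (X l) n)^2) \<longlonglongrightarrow> (\<Sum>n<N. (el (X k) n - v n)^2)"
          by (intro tendsto_sum tendsto_intros vlim)
        have "\<forall>\<^sub>F l in sequentially. (\<Sum>n<N. (el (X k) n - el (X l) n)^2) \<le> e^2"
          unfolding eventually_sequentially
        proof (intro exI allI impI)
          fix l assume l: "K \<le> l"
          have "(\<Sum>n<N. (el (X k) n - el (X l) n)^2) = (\<Sum>n<N. (el (X k - X l) n)^2)"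
            by (simp add: minus_ell.rep_eq)
          also have "\<dots> \<le> (\<Sum>n. (el (X k - X l) n)^2)"
            by (rule sum_le_suminf[OF el_sq_summable]) auto
          also have "\<dots> = (norm (X k - X l))^2" by (simp add: norm_ell_sq)
          also have "\<dots> \<le> e^2" using K k l e by (intro power_mono) (auto simp: less_imp_le)
          finally show "(\<Sum>n<N. (el (X k) n - el (X l) n)^2) \<le> e^2" .
        qed
        thus ?thesis using lim by (intro tendsto_le[OF _ tendsto_const lim]) auto
      qed
      have s: "summable (\<lambda>n. (el (X k) n - v n)^2)"
        by (rule summableI_nonneg_bounded[where x="e^2"]) (use ps in auto)
      show "summable (\<lambda>n. (el (X k) n - v n)^2) \<and> (\<Sum>n. (el (X k) n - v n)^2) \<le> e^2"
        using s ps by (auto intro: suminf_le_const)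
    qed
  qed
  obtain K where K: "summable (\<lambda>n. (el (X K) n - v n)^2)"
    using key[of 1] by auto
  have "(\<lambda>n. el (X K) n - (el (X K) n - v n)) \<in> l2"
    using l2_lincomb[of "el (X K)" "\<lambda>n. el (X K) n - v n" 1 "-1"] el_in K v0
    by (simp add: l2_iff)
  hence vl2: "v \<in> l2" by simp
  have "X \<longlonglongrightarrow> mkell v"
  proof (rule LIMSEQ_I)
    fix r :: real assume r: "r > 0"
    obtain K where K: "\<forall>k\<ge>K. summable (\<lambda>n. (el (X k) n - v n)^2) \<and> (\<Sum>n. (el (X k) n - v n)^2) \<le> (r/2)^2"
      using key[of "r/2"] r by auto
    show "\<exists>no. \<forall>n\<ge>no. norm (X n - mkell v) < r"
    proof (intro exI allI impI)
      fix k assume "K \<le> k"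
      hence "(\<Sum>n. (el (X k) n - v n)^2) \<le> (r/2)^2" using K by blast
      hence "(norm (X k - mkell v))^2 \<le> (r/2)^2"
        by (simp add: norm_ell_sq minus_ell.rep_eq mkell_inverse[OF vl2])
      hence "norm (X k - mkell v) \<le> r/2" using r by (simp add: power2_le_iff_abs_le)
      thus "norm (X k - mkell v) < r" using r by simp
    qed
  qed
  thus "convergent X" by (rule convergentI)
qed

instance ell :: banach ..


lemma el_mkell: "u \<in> l2 \<Longrightarrow> el (mkell u) = u"
  by (rule mkell_inverse)

lemma ell_eqI: "el x = el y \<Longrightarrow> x = y"
  by (simp add: el_inject)

lemma el_add: "el (x + y) = (\<lambda>n. el x n + el y n)"
  by (simp add: plus_ell.rep_eq)

lemma el_scale: "el (r *\<^sub>R x) = (\<lambda>n. r * el x n)"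
  by (simp add: scaleR_ell.rep_eq)

lemma norm_mkell: "u \<in> l2 \<Longrightarrow> norm (mkell u) = l2norm u"
  by (simp add: norm_ell_eq el_mkell)

lemma mk_bl:
  assumes T1: "\<And>u. u \<in> l2 \<Longrightarrow> T u \<in> l2"
    and T2: "\<And>u v a b. u \<in> l2 \<Longrightarrow> v \<in> l2 \<Longrightarrow> T (\<lambda>n. a * u n + b * v n) = (\<lambda>n. a * T u n + b * T v n)"
    and T3: "\<And>u. u \<in> l2 \<Longrightarrow> l2norm (T u) \<le> K * l2norm u"
  shows "bounded_linear (\<lambda>x. mkell (T (el x)))"
proof (rule bounded_linear_intro[where K="max K 0"])
  fix x y :: ell and r :: real
  have "T (el (x + y)) = T (\<lambda>n. 1 * el x n + 1 * el y n)" by (simp add: el_add)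
  also have "\<dots> = (\<lambda>n. 1 * T (el x) n + 1 * T (el y) n)" by (rule T2) (rule el_in)+
  finally show "mkell (T (el (x + y))) = mkell (T (el x)) + mkell (T (el y))"
    by (intro ell_eqI) (simp add: el_add el_mkell T1 el_in l2_add)
  have "T (el (r *\<^sub>R x)) = T (\<lambda>n. r * el x n + 0 * el x n)" by (simp add: el_scale)
  also have "\<dots> = (\<lambda>n. r * T (el x) n + 0 * T (el x) n)" by (rule T2) (rule el_in)+
  finally show "mkell (T (el (r *\<^sub>R x))) = r *\<^sub>R mkell (T (el x))"
    by (intro ell_eqI) (simp add: el_scale el_mkell T1 el_in l2_scale)
  have "norm (mkell (T (el x))) = l2norm (T (el x))" by (simp add: norm_mkell T1 el_in)
  also have "\<dots> \<le> K * l2norm (el x)" by (rule T3[OF el_in])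
  also have "\<dots> = K * norm x" by (simp add: norm_ell_eq)
  also have "\<dots> \<le> max K 0 * norm x" by (intro mult_right_mono) auto
  also have "\<dots> = norm x * max K 0" by (simp add: mult.commute)
  finally show "norm (mkell (T (el x))) \<le> norm x * max K 0" .
qed


locale sl_setting =
  fixes H :: real and rho w :: "real \<Rightarrow> real" and f :: "nat \<Rightarrow> real \<Rightarrow> real" and q0 q1 :: real
  assumes cf: "\<And>n. n \<ge> 1 \<Longrightarrow> continuous_on {-H..0} (f n)"
    and crho: "continuous_on {-H..0} rho"
    and cw: "continuous_on {-H..0} w"
    and wpos: "\<And>r. r \<in> {-H..0} \<Longrightarrow> w r > 0"
    and q0: "q0 > 0" and q1: "q1 > 0"
    and qb: "\<And>r. r \<in> {-H..0} \<Longrightarrow> q0 * w r \<le> rho r \<and> rho r \<le> q1 * w r"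
    and ortho: "\<And>n m. n \<ge> 1 \<Longrightarrow> m \<ge> 1 \<Longrightarrow>
        integral {-H..0} (\<lambda>r. f n r * f m r * w r) = (if n = m then 1 else 0)"
begin

definition B :: "(real \<Rightarrow> real) \<Rightarrow> (real \<Rightarrow> real) \<Rightarrow> real" where
  "B h k = integral {-H..0} (\<lambda>r. h r * k r * w r)"

definition A :: "nat \<Rightarrow> nat \<Rightarrow> real" where
  "A n m = integral {-H..0} (\<lambda>r. f n r * f m r * rho r)"

definition F :: "(nat \<Rightarrow> real) \<Rightarrow> nat set \<Rightarrow> real \<Rightarrow> real" where
  "F y S r = (\<Sum>m\<in>S. y m * f m r)"

lemma cF: "S \<subseteq> {1..} \<Longrightarrow> continuous_on {-H..0} (F y S)"
  unfolding F_def by (intro continuous_on_sum continuous_on_mult continuous_on_const) (auto intro!: cf)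

lemma cfn: "n \<ge> 1 \<Longrightarrow> continuous_on {-H..0} (\<lambda>r. f n r)"
  using cf[of n] by simp

lemma int_c: "continuous_on {-H..0} (g::real\<Rightarrow>real) \<Longrightarrow> g integrable_on {-H..0}"
  by (rule integrable_continuous_interval) assumption

lemma B_sym: "B h k = B k h"
  unfolding B_def by (simp add: mult_ac)

lemma B_F_left:
  assumes S: "finite S" "S \<subseteq> {1..}" and k: "continuous_on {-H..0} k"
  shows "B (F y S) k = (\<Sum>m\<in>S. y m * B (f m) k)"
proof -
  have "B (F y S) k = integral {-H..0} (\<lambda>r. \<Sum>m\<in>S. y m * (f m r * k r * w r))"
    unfolding B_def F_def
    by (rule integral_cong) (simp add: sum_distrib_right sum_distrib_left mult_ac)
  also have "\<dots> = (\<Sum>m\<in>S. integral {-H..0} (\<lambda>r. y m * (f m r * k r * w r)))"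
  proof (rule integral_sum[OF S(1)])
    fix m assume "m \<in> S"
    hence "m \<ge> 1" using S by auto
    thus "(\<lambda>r. y m * (f m r * k r * w r)) integrable_on {-H..0}"
      by (intro int_c continuous_intros cfn k cw)
  qed
  also have "\<dots> = (\<Sum>m\<in>S. y m * B (f m) k)"
    unfolding B_def using integral_cmul[where c="y _"] by (simp add: )
  finally show ?thesis .
qed

lemma B_F_right:
  assumes S: "finite S" "S \<subseteq> {1..}" and k: "continuous_on {-H..0} k"
  shows "B k (F y S) = (\<Sum>m\<in>S. y m * B k (f m))"
  using B_F_left[OF S k] by (simp add: B_sym)

lemma B_ff: "n \<ge> 1 \<Longrightarrow> m \<ge> 1 \<Longrightarrow> B (f n) (f m) = (if n = m then 1 else 0)"
  unfolding B_def by (rule ortho)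

lemma B_F_f:
  assumes S: "finite S" "S \<subseteq> {1..}" and m: "m \<in> S"
  shows "B (F y S) (f m) = y m"
proof -
  have m1: "m \<ge> 1" using S m by auto
  have "B (F y S) (f m) = (\<Sum>n\<in>S. y n * B (f n) (f m))"
    by (rule B_F_left[OF S]) (rule cf[OF m1])
  also have "\<dots> = (\<Sum>n\<in>S. if n = m then y n else 0)"
  proof (rule sum.cong[OF refl])
    fix n assume "n \<in> S"
    hence "n \<ge> 1" using S by auto
    thus "y n * B (f n) (f m) = (if n = m then y n else 0)" using m1 by (simp add: B_ff)
  qed
  also have "\<dots> = y m" using S m by simp
  finally show ?thesis .
qed

lemma B_FF: "finite S \<Longrightarrow> S \<subseteq> {1..} \<Longrightarrow> B (F x S) (F y S) = (\<Sum>m\<in>S. x m * y m)"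
proof -
  assume S: "finite S" "S \<subseteq> {1..}"
  have "B (F x S) (F y S) = (\<Sum>m\<in>S. y m * B (F x S) (f m))"
    by (rule B_F_right[OF S cF[OF S(2)]])
  also have "\<dots> = (\<Sum>m\<in>S. x m * y m)"
    by (rule sum.cong[OF refl]) (simp add: B_F_f[OF S])
  finally show ?thesis .
qed

lemma B_nonneg:
  assumes "continuous_on {-H..0} h"
  shows "0 \<le> B h h"
  unfolding B_def
proof (rule integral_nonneg)
  show "(\<lambda>r. h r * h r * w r) integrable_on {-H..0}" by (intro int_c continuous_intros assms cw)
  fix r assume "r \<in> {-H..0}"
  thus "0 \<le> h r * h r * w r" using wpos[of r] by simp
qed

lemma B_expand:
  assumes h: "continuous_on {-H..0} h" and k: "continuous_on {-H..0} k"
  shows "B (\<lambda>r. h r - k r) (\<lambda>r. h r - k r) = B h h - 2 * B h k + B k k"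
proof -
  have e: "(\<lambda>r. (h r - k r) * (h r - k r) * w r) = (\<lambda>r. (h r * h r * w r - 2 * (h r * k r * w r)) + k r * k r * w r)"
    by (auto simp: algebra_simps)
  have i1: "(\<lambda>r. h r * h r * w r) integrable_on {-H..0}" by (intro int_c continuous_intros h k cw)
  have i2: "(\<lambda>r. 2 * (h r * k r * w r)) integrable_on {-H..0}" by (intro int_c continuous_intros h k cw)
  have i3: "(\<lambda>r. k r * k r * w r) integrable_on {-H..0}" by (intro int_c continuous_intros h k cw)
  have i12: "(\<lambda>r. h r * h r * w r - 2 * (h r * k r * w r)) integrable_on {-H..0}"
    by (intro int_c continuous_intros h k cw)
  have "B (\<lambda>r. h r - k r) (\<lambda>r. h r - k r) = integral {-H..0} (\<lambda>r. h r * h r * w r - 2 * (h r * k r * w r)) + B k k"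
    unfolding B_def e by (rule integral_add[OF i12 i3])
  also have "integral {-H..0} (\<lambda>r. h r * h r * w r - 2 * (h r * k r * w r)) = B h h - integral {-H..0} (\<lambda>r. 2 * (h r * k r * w r))"
    unfolding B_def by (rule integral_diff[OF i1 i2])
  also have "integral {-H..0} (\<lambda>r. 2 * (h r * k r * w r)) = 2 * B h k"
    unfolding B_def using integral_cmul[where c=2 and f="\<lambda>r. h r * k r * w r" and S="{-H..0}"] by simp
  finally show ?thesis .
qed

lemma bessel:
  assumes h: "continuous_on {-H..0} h"
  shows "(\<Sum>n\<in>{1..K}. (B h (f n))^2) \<le> B h h"
proof -
  define a where "a n = B h (f n)" for n
  let ?S = "{1..K::nat}"
  have S: "finite ?S" "?S \<subseteq> {1..}" by auto
  have cFa: "continuous_on {-H..0} (F a ?S)" by (rule cF) auto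
  have "0 \<le> B (\<lambda>r. h r - F a ?S r) (\<lambda>r. h r - F a ?S r)"
    by (rule B_nonneg) (intro continuous_intros h cFa)
  also have "\<dots> = B h h - 2 * B h (F a ?S) + B (F a ?S) (F a ?S)"
    by (rule B_expand[OF h cFa])
  also have "B h (F a ?S) = (\<Sum>n\<in>?S. (a n)^2)"
    by (subst B_F_right[OF S h]) (simp add: a_def power2_eq_square)
  also have "B (F a ?S) (F a ?S) = (\<Sum>n\<in>?S. (a n)^2)"
    by (subst B_FF[OF S]) (simp add: power2_eq_square)
  finally show ?thesis by (simp add: a_def)
qed


definition R :: "(real \<Rightarrow> real) \<Rightarrow> (real \<Rightarrow> real) \<Rightarrow> real" where
  "R h k = integral {-H..0} (\<lambda>r. h r * k r * rho r)"

definition Q :: "(real \<Rightarrow> real) \<Rightarrow> real \<Rightarrow> real" where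
  "Q g r = g r * rho r / w r"

lemma cQ: "continuous_on {-H..0} g \<Longrightarrow> continuous_on {-H..0} (Q g)"
  unfolding Q_def by (intro continuous_intros crho cw) (use wpos in \<open>auto simp: less_imp_neq[symmetric]\<close>)

lemma R_B: "R h k = B h (Q k)"
  unfolding R_def B_def Q_def
  by (rule integral_cong) (use wpos in \<open>auto simp: less_imp_neq[symmetric]\<close>)

lemma R_sym: "R h k = R k h"
  unfolding R_def by (simp add: mult_ac)

lemma A_R: "A n m = R (f n) (f m)"
  unfolding A_def R_def ..

lemma R_F_left:
  assumes S: "finite S" "S \<subseteq> {1..}" and k: "continuous_on {-H..0} k"
  shows "R (F y S) k = (\<Sum>m\<in>S. y m * R (f m) k)"
  unfolding R_B by (rule B_F_left[OF S cQ[OF k]])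

lemma R_F_right:
  assumes S: "finite S" "S \<subseteq> {1..}" and k: "continuous_on {-H..0} k"
  shows "R k (F y S) = (\<Sum>m\<in>S. y m * R k (f m))"
  using R_F_left[OF S k] by (simp add: R_sym)

lemma R_ge:
  assumes g: "continuous_on {-H..0} g"
  shows "q0 * B g g \<le> R g g"
proof -
  have "q0 * B g g = integral {-H..0} (\<lambda>r. q0 * (g r * g r * w r))"
    unfolding B_def using integral_cmul[where c=q0 and f="\<lambda>r. g r * g r * w r" and S="{-H..0}"] by simp
  also have "\<dots> \<le> R g g"
    unfolding R_def
  proof (rule integral_le)
    show "(\<lambda>r. q0 * (g r * g r * w r)) integrable_on {-H..0}" by (intro int_c continuous_intros g cw)
    show "(\<lambda>r. g r * g r * rho r) integrable_on {-H..0}" by (intro int_c continuous_intros g crho)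
    fix r assume r: "r \<in> {-H..0}"
    have "q0 * w r \<le> rho r" using qb[OF r] by simp
    hence "(g r * g r) * (q0 * w r) \<le> (g r * g r) * rho r" by (intro mult_left_mono) simp_all
    thus "q0 * (g r * g r * w r) \<le> g r * g r * rho r" by (simp add: mult_ac)
  qed
  finally show ?thesis .
qed

lemma BQQ_le:
  assumes g: "continuous_on {-H..0} g"
  shows "B (Q g) (Q g) \<le> q1^2 * B g g"
proof -
  have "B (Q g) (Q g) \<le> integral {-H..0} (\<lambda>r. q1^2 * (g r * g r * w r))"
    unfolding B_def
  proof (rule integral_le)
    show "(\<lambda>r. Q g r * Q g r * w r) integrable_on {-H..0}" by (intro int_c continuous_intros cQ g cw)
    show "(\<lambda>r. q1^2 * (g r * g r * w r)) integrable_on {-H..0}" by (intro int_c continuous_intros g cw)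
    fix r assume r: "r \<in> {-H..0}"
    have w: "w r > 0" by (rule wpos[OF r])
    have rh: "0 \<le> rho r" "rho r \<le> q1 * w r" using qb[OF r] q0 w by (auto intro: order_trans[rotated])
    have "rho r * rho r \<le> (q1 * w r) * (q1 * w r)" using rh by (intro mult_mono) auto
    hence "(g r * g r / w r) * (rho r * rho r) \<le> (g r * g r / w r) * ((q1 * w r) * (q1 * w r))"
      using w by (intro mult_left_mono) auto
    thus "Q g r * Q g r * w r \<le> q1^2 * (g r * g r * w r)"
      using w by (simp add: Q_def power2_eq_square field_simps)
  qed
  also have "\<dots> = q1^2 * B g g"
    unfolding B_def using integral_cmul[where c="q1^2" and f="\<lambda>r. g r * g r * w r" and S="{-H..0}"] by simp
  finally show ?thesis .
qed


definition Aop :: "(nat \<Rightarrow> real) \<Rightarrow> nat \<Rightarrow> real" where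
  "Aop u n = (if n = 0 then 0 else (\<Sum>m. A n m * u m))"

definition tr :: "nat \<Rightarrow> (nat \<Rightarrow> real) \<Rightarrow> nat \<Rightarrow> real" where
  "tr N u m = (if m \<le> N then u m else 0)"

lemma sum_1N: "g 0 = 0 \<Longrightarrow> (\<Sum>m\<le>(N::nat). g m) = (\<Sum>m\<in>{1..N}. (g m :: real))"
proof -
  assume g: "g 0 = 0"
  have "sum g {..N} = sum g {0..N}" by (simp add: atMost_atLeast0)
  also have "\<dots> = g 0 + sum g {Suc 0..N}" by (rule sum.atLeast_Suc_atMost) simp
  finally show ?thesis using g by simp
qed

lemma A_BQ: "A n m = B (Q (f n)) (f m)"
proof -
  have "A n m = R (f m) (f n)" unfolding A_R by (rule R_sym)
  also have "\<dots> = B (f m) (Q (f n))" by (rule R_B)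
  also have "\<dots> = B (Q (f n)) (f m)" by (rule B_sym)
  finally show ?thesis .
qed

lemma row_l2:
  assumes n: "n \<ge> 1"
  shows "(\<lambda>m. if m = 0 then 0 else A n m) \<in> l2"
proof -
  have cq: "continuous_on {-H..0} (Q (f n))" by (rule cQ[OF cf[OF n]])
  have bnd: "(\<Sum>m\<in>{1..N}. (A n m)^2) \<le> B (Q (f n)) (Q (f n))" for N
  proof -
    have "(\<Sum>m\<in>{1..N}. (A n m)^2) = (\<Sum>m\<in>{1..N}. (B (Q (f n)) (f m))^2)"
      by (rule sum.cong[OF refl]) (simp add: A_BQ)
    also have "\<dots> \<le> B (Q (f n)) (Q (f n))" by (rule bessel[OF cq])
    finally show ?thesis .
  qed
  have "summable (\<lambda>m. (if m = 0 then 0 else A n m)^2)"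
  proof (rule summableI_nonneg_bounded[where x="B (Q (f n)) (Q (f n))"])
    fix K
    show "(\<Sum>m<K. (if m = 0 then 0 else A n m)^2) \<le> B (Q (f n)) (Q (f n))"
    proof (cases K)
      case 0 thus ?thesis using B_nonneg[OF cq] by simp
    next
      case (Suc N)
      have "(\<Sum>m<K. (if m = 0 then 0 else A n m)^2) = (\<Sum>m\<le>N. (if m = 0 then 0 else A n m)^2)"
        using Suc lessThan_Suc_atMost by simp
      also have "\<dots> = (\<Sum>m\<in>{1..N}. (if m = 0 then 0 else A n m)^2)" by (rule sum_1N) simp
      also have "\<dots> = (\<Sum>m\<in>{1..N}. (A n m)^2)" by (rule sum.cong) auto
      finally show ?thesis using bnd[of N] by simp
    qed
  qed simp
  thus ?thesis by (simp add: l2_iff)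
qed

lemma Aop_abs_summable:
  assumes u: "u \<in> l2" and n: "n \<ge> 1"
  shows "summable (\<lambda>m. \<bar>A n m * u m\<bar>)"
proof -
  have "summable (\<lambda>m. \<bar>(if m = 0 then 0 else A n m) * u m\<bar>)"
    by (rule l2_prod_summable[OF row_l2[OF n] u])
  moreover have "(\<lambda>m. \<bar>(if m = 0 then 0 else A n m) * u m\<bar>) = (\<lambda>m. \<bar>A n m * u m\<bar>)"
    using u by (auto simp: l2_iff)
  ultimately show ?thesis by simp
qed

lemma Aop_summable: "u \<in> l2 \<Longrightarrow> n \<ge> 1 \<Longrightarrow> summable (\<lambda>m. A n m * u m)"
  by (rule summable_rabs_cancel[OF Aop_abs_summable])

lemma tr_l2: "u \<in> l2 \<Longrightarrow> tr N u \<in> l2"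
  unfolding l2_iff
proof (intro conjI)
  assume u: "u 0 = 0 \<and> summable (\<lambda>n. (u n)^2)"
  thus "tr N u 0 = 0" by (simp add: tr_def)
  show "summable (\<lambda>n. (tr N u n)^2)"
    by (rule summable_comparison_test'[OF conjunct2[OF u]]) (auto simp: tr_def)
qed

lemma Aop_tr_sum:
  assumes u: "u \<in> l2" and n: "n \<ge> 1"
  shows "Aop (tr N u) n = (\<Sum>m\<le>N. A n m * u m)"
proof -
  have "Aop (tr N u) n = (\<Sum>m. A n m * tr N u m)" using n by (simp add: Aop_def)
  also have "\<dots> = (\<Sum>m\<in>{..N}. A n m * tr N u m)"
    by (rule suminf_finite) (auto simp: tr_def)
  also have "\<dots> = (\<Sum>m\<le>N. A n m * u m)" by (rule sum.cong) (auto simp: tr_def)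
  finally show ?thesis .
qed

lemma Aop_tr_R:
  assumes u: "u \<in> l2" and n: "n \<ge> 1"
  shows "Aop (tr N u) n = R (f n) (F u {1..N})"
proof -
  have "Aop (tr N u) n = (\<Sum>m\<in>{1..N}. A n m * u m)"
    unfolding Aop_tr_sum[OF u n] by (rule sum_1N) (use u in \<open>simp add: l2_iff\<close>)
  also have "\<dots> = R (f n) (F u {1..N})"
    by (subst R_F_right) (auto simp: A_R mult.commute intro: cf[OF n])
  finally show ?thesis .
qed

lemma Aop_tr_lim:
  assumes u: "u \<in> l2"
  shows "(\<lambda>N. Aop (tr N u) n) \<longlonglongrightarrow> Aop u n"
proof (cases "n = 0")
  case True thus ?thesis by (simp add: Aop_def)
next
  case False
  hence n: "n \<ge> 1" by simp
  have "(\<lambda>N. \<Sum>m\<le>N. A n m * u m) \<longlonglongrightarrow> (\<Sum>m. A n m * u m)"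
    by (rule summable_LIMSEQ'[OF Aop_summable[OF u n]])
  moreover have "(\<lambda>N. Aop (tr N u) n) = (\<lambda>N. \<Sum>m\<le>N. A n m * u m)"
    by (rule ext) (rule Aop_tr_sum[OF u n])
  ultimately show ?thesis using n by (simp add: Aop_def)
qed

lemma sumsq_le: "u \<in> l2 \<Longrightarrow> (\<Sum>m\<in>S. (u m)^2) \<le> (\<Sum>m. (u m)^2)" if "finite S"
  by (rule sum_le_suminf) (use that in \<open>auto simp: l2_iff\<close>)

lemma Aop_tr_bound:
  assumes u: "u \<in> l2"
  shows "(\<Sum>n\<in>{1..K}. (Aop (tr N u) n)^2) \<le> q1^2 * (\<Sum>m\<in>{1..N}. (u m)^2)"
proof -
  let ?S = "{1..N}"
  let ?G = "F u ?S"
  have S: "finite ?S" "?S \<subseteq> {1..}" by auto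
  have cG: "continuous_on {-H..0} ?G" by (rule cF) auto
  have "(\<Sum>n\<in>{1..K}. (Aop (tr N u) n)^2) = (\<Sum>n\<in>{1..K}. (B (Q ?G) (f n))^2)"
    by (rule sum.cong[OF refl]) (simp add: Aop_tr_R[OF u] R_B B_sym)
  also have "\<dots> \<le> B (Q ?G) (Q ?G)" by (rule bessel[OF cQ[OF cG]])
  also have "\<dots> \<le> q1^2 * B ?G ?G" by (rule BQQ_le[OF cG])
  also have "B ?G ?G = (\<Sum>m\<in>?S. (u m)^2)" by (subst B_FF[OF S]) (simp add: power2_eq_square)
  finally show ?thesis .
qed

lemma Aop_l2:
  assumes u: "u \<in> l2"
  shows "Aop u \<in> l2" "(\<Sum>n. (Aop u n)^2) \<le> q1^2 * (\<Sum>m. (u m)^2)"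
proof -
  have bK: "(\<Sum>n\<in>{1..K}. (Aop u n)^2) \<le> q1^2 * (\<Sum>m. (u m)^2)" for K
  proof -
    have lim: "(\<lambda>N. \<Sum>n\<in>{1..K}. (Aop (tr N u) n)^2) \<longlonglongrightarrow> (\<Sum>n\<in>{1..K}. (Aop u n)^2)"
      by (intro tendsto_sum tendsto_power Aop_tr_lim[OF u])
    have "(\<Sum>n\<in>{1..K}. (Aop (tr N u) n)^2) \<le> q1^2 * (\<Sum>m. (u m)^2)" for N
    proof -
      have "(\<Sum>n\<in>{1..K}. (Aop (tr N u) n)^2) \<le> q1^2 * (\<Sum>m\<in>{1..N}. (u m)^2)"
        by (rule Aop_tr_bound[OF u])
      also have "\<dots> \<le> q1^2 * (\<Sum>m. (u m)^2)"
        by (intro mult_left_mono sumsq_le u) auto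
      finally show ?thesis .
    qed
    thus ?thesis by (intro tendsto_le[OF _ tendsto_const lim]) auto
  qed
  have A0: "Aop u 0 = 0" by (simp add: Aop_def)
  have ps: "(\<Sum>n<K. (Aop u n)^2) \<le> q1^2 * (\<Sum>m. (u m)^2)" for K
  proof -
    have "(\<Sum>n<K. (Aop u n)^2) \<le> (\<Sum>n\<le>K. (Aop u n)^2)"
      by (intro sum_mono2) auto
    also have "\<dots> = (\<Sum>n\<in>{1..K}. (Aop u n)^2)" by (rule sum_1N) (simp add: A0)
    finally show ?thesis using bK[of K] by simp
  qed
  have sm: "summable (\<lambda>n. (Aop u n)^2)"
    by (rule summableI_nonneg_bounded[where x="q1^2 * (\<Sum>m. (u m)^2)"]) (use ps in auto)
  thus "Aop u \<in> l2" using A0 by (simp add: l2_iff)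
  show "(\<Sum>n. (Aop u n)^2) \<le> q1^2 * (\<Sum>m. (u m)^2)"
    by (rule suminf_le_const[OF sm ps])
qed

lemma Aop_lin:
  assumes u: "u \<in> l2" and v: "v \<in> l2"
  shows "Aop (\<lambda>m. a * u m + b * v m) = (\<lambda>n. a * Aop u n + b * Aop v n)"
proof (rule ext)
  fix n
  show "Aop (\<lambda>m. a * u m + b * v m) n = a * Aop u n + b * Aop v n"
  proof (cases "n = 0")
    case True thus ?thesis by (simp add: Aop_def)
  next
    case False
    hence n: "n \<ge> 1" by simp
    have "(\<Sum>m. A n m * (a * u m + b * v m)) = (\<Sum>m. a * (A n m * u m) + b * (A n m * v m))"
      by (simp add: algebra_simps)
    also have "\<dots> = (\<Sum>m. a * (A n m * u m)) + (\<Sum>m. b * (A n m * v m))"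
      by (rule suminf_add[symmetric]) (intro summable_mult Aop_summable u v n)+
    also have "\<dots> = a * (\<Sum>m. A n m * u m) + b * (\<Sum>m. A n m * v m)"
      by (simp add: suminf_mult Aop_summable[OF u n] Aop_summable[OF v n])
    finally show ?thesis using n by (simp add: Aop_def)
  qed
qed


lemma Aop_norm: "u \<in> l2 \<Longrightarrow> l2norm (Aop u) \<le> q1 * l2norm u"
proof -
  assume u: "u \<in> l2"
  have "l2norm (Aop u) = sqrt (\<Sum>n. (Aop u n)^2)" by (rule l2_norm_eq[OF Aop_l2(1)[OF u]])
  also have "\<dots> \<le> sqrt (q1^2 * (\<Sum>m. (u m)^2))" by (rule real_sqrt_le_mono[OF Aop_l2(2)[OF u]])
  also have "\<dots> = q1 * l2norm u" using q1 by (simp add: real_sqrt_mult l2_norm_eq[OF u])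
  finally show ?thesis .
qed

lemma bl_A: "bounded_linear (\<lambda>x. mkell (Aop (el x)))"
  by (rule mk_bl[OF Aop_l2(1) Aop_lin Aop_norm])

definition Aell :: "ell \<Rightarrow>\<^sub>L ell" where "Aell = Blinfun (\<lambda>x. mkell (Aop (el x)))"

lemma Aell_apply: "blinfun_apply Aell x = mkell (Aop (el x))"
  unfolding Aell_def by (simp add: bounded_linear_Blinfun_apply[OF bl_A])

lemma el_Aell: "el (blinfun_apply Aell x) = Aop (el x)"
  by (simp add: Aell_apply el_mkell Aop_l2(1) el_in)

definition tN :: "nat \<Rightarrow> ell \<Rightarrow> ell" where "tN N x = mkell (tr N (el x))"

lemma el_tN: "el (tN N x) = tr N (el x)"
  by (simp add: tN_def el_mkell tr_l2 el_in)

lemma tN_lim: "(\<lambda>N. tN N x) \<longlonglongrightarrow> x"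
proof -
  let ?g = "\<lambda>m. (el x m)^2"
  have sg: "summable ?g" by (rule el_sq_summable)
  have nsq: "(norm (x - tN N x))^2 = (\<Sum>m. ?g m) - (\<Sum>m\<le>N. ?g m)" for N
  proof -
    have "(\<lambda>m. (el (x - tN N x) m)^2) = (\<lambda>m. if m \<in> {..N} then 0 else ?g m)"
      by (rule ext) (simp add: minus_ell.rep_eq el_tN tr_def)
    hence "(norm (x - tN N x))^2 = (\<Sum>m. (if m \<in> {..N} then 0 else ?g m))"
      by (simp add: norm_ell_sq)
    also have "(\<lambda>m. if m \<in> {..N} then 0 else ?g m) sums ((\<Sum>m. ?g m) + (\<Sum>m\<in>{..N}. 0 - ?g m))"
      by (rule sums_If_finite_set'[OF summable_sums[OF sg]]) auto
    hence "(\<Sum>m. (if m \<in> {..N} then 0 else ?g m)) = (\<Sum>m. ?g m) + (\<Sum>m\<in>{..N}. 0 - ?g m)"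
      by (rule sums_unique[symmetric])
    finally show ?thesis by (simp add: sum_negf)
  qed
  have "(\<lambda>N. (\<Sum>m. ?g m) - (\<Sum>m\<le>N. ?g m)) \<longlonglongrightarrow> (\<Sum>m. ?g m) - (\<Sum>m. ?g m)"
    by (intro tendsto_diff tendsto_const summable_LIMSEQ'[OF sg])
  hence "(\<lambda>N. (norm (x - tN N x))^2) \<longlonglongrightarrow> 0" by (simp add: nsq)
  hence "(\<lambda>N. sqrt ((norm (x - tN N x))^2)) \<longlonglongrightarrow> sqrt 0" by (rule tendsto_real_sqrt)
  hence "(\<lambda>N. norm (x - tN N x)) \<longlonglongrightarrow> 0" by simp
  hence "(\<lambda>N. x - tN N x) \<longlonglongrightarrow> 0" by (simp add: tendsto_norm_zero_iff)
  hence "(\<lambda>N. x - (x - tN N x)) \<longlonglongrightarrow> x - 0" by (intro tendsto_diff tendsto_const)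
  thus ?thesis by simp
qed

lemma inner_tN: "inner (Aell (tN N x)) (tN N y) = R (F (el y) {1..N}) (F (el x) {1..N})"
proof -
  let ?ux = "el x" and ?uy = "el y"
  have "inner (Aell (tN N x)) (tN N y) = (\<Sum>n. Aop (tr N ?ux) n * tr N ?uy n)"
    by (simp add: inner_ell.rep_eq el_Aell el_tN)
  also have "\<dots> = (\<Sum>n\<in>{..N}. Aop (tr N ?ux) n * tr N ?uy n)"
    by (rule suminf_finite) (auto simp: tr_def)
  also have "\<dots> = (\<Sum>n\<in>{1..N}. Aop (tr N ?ux) n * tr N ?uy n)"
    by (rule sum_1N) (simp add: Aop_def)
  also have "\<dots> = (\<Sum>n\<in>{1..N}. ?uy n * R (f n) (F ?ux {1..N}))"
    by (rule sum.cong[OF refl]) (auto simp: tr_def Aop_tr_R el_in)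
  also have "\<dots> = R (F ?uy {1..N}) (F ?ux {1..N})"
    by (rule R_F_left[symmetric]) (auto intro: cF)
  finally show ?thesis .
qed

lemma normsq_tN: "(norm (tN N x))^2 = B (F (el x) {1..N}) (F (el x) {1..N})"
proof -
  have "(norm (tN N x))^2 = (\<Sum>m. (tr N (el x) m)^2)" by (simp add: norm_ell_sq el_tN)
  also have "\<dots> = (\<Sum>m\<in>{..N}. (tr N (el x) m)^2)"
    by (rule suminf_finite) (auto simp: tr_def)
  also have "\<dots> = (\<Sum>m\<in>{1..N}. (tr N (el x) m)^2)"
    by (rule sum_1N) (use el_in[of x] in \<open>simp add: tr_def l2_iff\<close>)
  also have "\<dots> = (\<Sum>m\<in>{1..N}. el x m * el x m)"
    by (rule sum.cong) (auto simp: tr_def power2_eq_square)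
  also have "\<dots> = B (F (el x) {1..N}) (F (el x) {1..N})"
    by (rule B_FF[symmetric]) auto
  finally show ?thesis .
qed

lemma inner_lim: "(\<lambda>N. inner (Aell (tN N x)) (tN N y)) \<longlonglongrightarrow> inner (Aell x) y"
  by (intro tendsto_inner blinfun.tendsto[OF tendsto_const] tN_lim)

lemma Aell_sym: "inner (Aell x) y = inner x (Aell y)"
proof -
  have "(\<lambda>N. inner (Aell (tN N x)) (tN N y)) = (\<lambda>N. inner (Aell (tN N y)) (tN N x))"
    by (simp add: inner_tN R_sym)
  hence "inner (Aell x) y = inner (Aell y) x"
    using inner_lim[of x y] inner_lim[of y x] LIMSEQ_unique by metis
  thus ?thesis by (simp add: inner_commute)
qed

lemma Aell_coer: "q0 * (norm x)^2 \<le> inner (Aell x) x"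
proof -
  have "q0 * (norm (tN N x))^2 \<le> inner (Aell (tN N x)) (tN N x)" for N
    unfolding normsq_tN inner_tN by (rule R_ge) (auto intro: cF)
  moreover have "(\<lambda>N. q0 * (norm (tN N x))^2) \<longlonglongrightarrow> q0 * (norm x)^2"
    by (intro tendsto_intros tN_lim)
  ultimately show ?thesis
    by (intro tendsto_le[OF _ inner_lim]) auto
qed

lemma Aell_norm: "norm (Aell x) \<le> q1 * norm x"
proof -
  have "norm (Aell x) = l2norm (Aop (el x))" by (simp add: Aell_apply norm_mkell[OF Aop_l2(1)[OF el_in]])
  also have "\<dots> \<le> q1 * l2norm (el x)" by (rule Aop_norm[OF el_in])
  finally show ?thesis by (simp add: norm_ell_eq)
qed

end

definition Dop :: "(nat \<Rightarrow> real) \<Rightarrow> (nat \<Rightarrow> real) \<Rightarrow> nat \<Rightarrow> real" where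
  "Dop c u n = c n * u n"

lemma Dop_sq_le:
  assumes c: "\<forall>n\<ge>1. 0 < c n \<and> c n \<le> c1" and u: "u \<in> l2"
  shows "(Dop c u n)^2 \<le> c1^2 * (u n)^2"
proof (cases "n = 0")
  case True thus ?thesis using u by (simp add: l2_iff Dop_def)
next
  case False
  hence "0 < c n" "c n \<le> c1" using c by auto
  hence "(c n)^2 \<le> c1^2" by (intro power_mono) auto
  hence "(c n)^2 * (u n)^2 \<le> c1^2 * (u n)^2" by (intro mult_right_mono) auto
  thus ?thesis by (simp add: Dop_def power_mult_distrib)
qed

lemma Dop_l2:
  assumes c: "\<forall>n\<ge>1. 0 < c n \<and> c n \<le> c1" and u: "u \<in> l2"
  shows "Dop c u \<in> l2"
  unfolding l2_iff
proof
  show "Dop c u 0 = 0" using u by (simp add: l2_iff Dop_def)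
  show "summable (\<lambda>n. (Dop c u n)^2)"
    by (rule summable_comparison_test'[where g="\<lambda>n. c1^2 * (u n)^2"])
       (use u Dop_sq_le[OF c u] in \<open>auto simp: l2_iff intro: summable_mult\<close>)
qed

lemma Dop_norm:
  assumes c: "\<forall>n\<ge>1. 0 < c n \<and> c n \<le> c1" and c1: "c1 > 0" and u: "u \<in> l2"
  shows "l2norm (Dop c u) \<le> c1 * l2norm u"
proof -
  have "l2norm (Dop c u) = sqrt (\<Sum>n. (Dop c u n)^2)" by (rule l2_norm_eq[OF Dop_l2[OF c u]])
  also have "\<dots> \<le> sqrt (\<Sum>n. c1^2 * (u n)^2)"
    by (intro real_sqrt_le_mono suminf_le Dop_sq_le[OF c u])
       (use Dop_l2[OF c u] u in \<open>auto simp: l2_iff intro: summable_mult\<close>)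
  also have "\<dots> = sqrt (c1^2 * (\<Sum>n. (u n)^2))"
    using u by (simp add: suminf_mult l2_iff)
  also have "\<dots> = c1 * l2norm u" using c1 by (simp add: real_sqrt_mult l2_norm_eq[OF u])
  finally show ?thesis .
qed

lemma Dop_lin: "Dop c (\<lambda>m. a * u m + b * v m) = (\<lambda>n. a * Dop c u n + b * Dop c v n)"
  by (auto simp: Dop_def algebra_simps)

definition Dell :: "(nat \<Rightarrow> real) \<Rightarrow> ell \<Rightarrow>\<^sub>L ell" where
  "Dell c = Blinfun (\<lambda>x. mkell (Dop c (el x)))"

lemma Dell_apply:
  assumes c: "\<forall>n\<ge>1. 0 < c n \<and> c n \<le> c1" and c1: "c1 > 0"
  shows "blinfun_apply (Dell c) x = mkell (Dop c (el x))"
proof -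
  have "bounded_linear (\<lambda>x. mkell (Dop c (el x)))"
    by (rule mk_bl[OF Dop_l2[OF c] Dop_lin Dop_norm[OF c c1]])
  thus ?thesis unfolding Dell_def by (simp add: bounded_linear_Blinfun_apply)
qed

lemma el_Dell:
  assumes c: "\<forall>n\<ge>1. 0 < c n \<and> c n \<le> c1" and c1: "c1 > 0"
  shows "el (blinfun_apply (Dell c) x) = Dop c (el x)"
  by (simp add: Dell_apply[OF c c1] el_mkell Dop_l2[OF c] el_in)

lemma Dell_sym:
  assumes c: "\<forall>n\<ge>1. 0 < c n \<and> c n \<le> c1" and c1: "c1 > 0"
  shows "inner (Dell c x) y = inner x (Dell c y)"
  by (simp add: inner_ell.rep_eq el_Dell[OF c c1] Dop_def mult_ac)

lemma Dell_norm:
  assumes c: "\<forall>n\<ge>1. 0 < c n \<and> c n \<le> c1" and c1: "c1 > 0"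
  shows "norm (Dell c x) \<le> c1 * norm x"
  using Dop_norm[OF c c1 el_in[of x]] by (simp add: norm_ell_eq el_Dell[OF c c1])

lemma norm_Dell_eq:
  assumes c: "\<forall>n\<ge>1. 0 < c n \<and> c n \<le> c1" and c1: "c1 > 0" and u: "u \<in> l2"
  shows "norm (Dell c (mkell u)) = l2norm (\<lambda>n. c n * u n)"
proof -
  have "Dop c u = (\<lambda>n. c n * u n)" by (rule ext) (simp add: Dop_def)
  thus ?thesis by (simp add: norm_ell_eq el_Dell[OF c c1] el_mkell u)
qed

lemma LINT_cont:
  fixes \<phi> :: "real \<Rightarrow> real"
  assumes "continuous_on {a..b} \<phi>"
  shows "(LINT r:{a..b}|lborel. \<phi> r) = integral {a..b} \<phi>"
  by (rule set_borel_integral_eq_integral(2)[OF borel_integrable_atLeastAtMost'[OF assms]])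


theorem proposition3p2:
  fixes H g c_low c_up :: real
    and rho :: "real \<Rightarrow> real"
    and c :: "nat \<Rightarrow> real"
    and f :: "nat \<Rightarrow> real \<Rightarrow> real"
  assumes H: "H > 0" and g: "g > 0"
    and smooth: "smooth_on {-H..0} rho"
    and cpos: "c_low > 0" "c_up > 0"
    and rho_bounds: "\<forall>r\<in>{-H..0}. c_low \<le> rho r \<and> rho r \<le> c_up"
    and drho: "\<forall>r\<in>{-H..0}. - deriv rho r \<ge> c_low"
    and eig: "\<forall>n\<ge>1. SL_eigen H rho (Nsq g rho) (c n) (f n)"
    and cdec: "\<forall>n\<ge>1. \<forall>m\<ge>n. c m \<le> c n"
    and onb: "ONB_weighted H (\<lambda>r. rho r * Nsq g rho r) f"
  shows "\<exists>C>0.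
    \<comment> \<open>(i)\<close>
    (\<forall>u\<in>l2. (\<forall>n\<ge>1. (\<lambda>m. Mmat H rho c f n m * u m) summable_on {1..})) \<and>
    bounded_linear_l2 (Mop (Mmat H rho c f)) \<and>
    (\<forall>u\<in>l2. l2norm (Mop (Mmat H rho c f) u) \<le> C * l2norm (\<lambda>n. c n * u n)) \<and>
    \<comment> \<open>(ii)\<close>
    (\<forall>u\<in>l2. \<forall>v\<in>l2. l2inner (Mop (Mmat H rho c f) u) v = l2inner u (Mop (Mmat H rho c f) v)) \<and>
    \<comment> \<open>(iii)\<close>
    (\<forall>u\<in>l2. l2inner (Mop (Mmat H rho c f) u) u \<ge> (1 / C) * (l2norm (\<lambda>n. c n * u n))\<^sup>2) \<and>
    \<comment> \<open>(iv)\<close>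
    (\<exists>S. positive_l2 S \<and> (\<forall>u\<in>l2. S (S u) = Mop (Mmat H rho c f) u) \<and>
         (\<forall>S'. positive_l2 S' \<and> (\<forall>u\<in>l2. S' (S' u) = Mop (Mmat H rho c f) u)
               \<longrightarrow> (\<forall>u\<in>l2. S' u = S u)) \<and>
         (\<forall>u\<in>l2. (1 / C) * l2norm (\<lambda>n. c n * u n) \<le> l2norm (S u) \<and>
                  l2norm (S u) \<le> C * l2norm (\<lambda>n. c n * u n))) \<and>
    \<comment> \<open>(v)\<close>
    (\<forall>K. (\<forall>r\<in>{-H..0}. Nsq g rho r = K) \<longrightarrow>
         (\<forall>n\<ge>1. \<forall>m\<ge>1. Mmat H rho c f n m = (if n = m then (c n)\<^sup>2 / K else 0)))"
proof -
  obtain U where U: "open U" "{-H..0} \<subseteq> U"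
      "\<forall>k. \<forall>x\<in>U. ((deriv ^^ k) rho) differentiable (at x)"
    using smooth unfolding smooth_on_def by blast
  have d0: "rho differentiable (at x)" if "x \<in> {-H..0}" for x
    using U(3) U(2) that by (metis funpow_0 subsetD)
  have d1: "(deriv rho) differentiable (at x)" if "x \<in> {-H..0}" for x
  proof -
    have "((deriv ^^ 1) rho) differentiable (at x)" using U(3) U(2) that by blast
    thus ?thesis by simp
  qed
  have crho: "continuous_on {-H..0} rho"
    by (intro continuous_at_imp_continuous_on ballI differentiable_imp_continuous_within d0)
  have cd: "continuous_on {-H..0} (deriv rho)"
    by (intro continuous_at_imp_continuous_on ballI differentiable_imp_continuous_within d1)
  have rho_pos: "rho r > 0" if "r \<in> {-H..0}" for r
    using rho_bounds that cpos by force
  define w where "w = (\<lambda>r. rho r * Nsq g rho r)"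
  have w_eq: "w r = - g * deriv rho r" if "r \<in> {-H..0}" for r
    using rho_pos[OF that] by (simp add: w_def Nsq_def)
  have cw: "continuous_on {-H..0} w"
    unfolding w_def Nsq_def
    by (intro continuous_intros crho cd) (use rho_pos in \<open>auto simp: less_imp_neq[symmetric]\<close>)
  have wlow: "g * c_low \<le> w r" if "r \<in> {-H..0}" for r
  proof -
    have "c_low \<le> - deriv rho r" using drho that by auto
    hence "g * c_low \<le> g * (- deriv rho r)" by (intro mult_left_mono) (use g in auto)
    thus ?thesis by (simp add: w_eq[OF that])
  qed
  obtain Dm where Dm: "Dm > 0" "\<forall>r\<in>{-H..0}. norm (deriv rho r) \<le> Dm"
  proof -
    have "compact (deriv rho ` {-H..0})" by (rule compact_continuous_image[OF cd compact_Icc])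
    hence "bounded (deriv rho ` {-H..0})" by (rule compact_imp_bounded)
    thus ?thesis using that unfolding bounded_pos by auto
  qed
  have wup: "w r \<le> g * Dm" if "r \<in> {-H..0}" for r
  proof -
    have "\<bar>deriv rho r\<bar> \<le> Dm" using Dm(2) that by auto
    hence "- deriv rho r \<le> Dm" by linarith
    hence "g * (- deriv rho r) \<le> g * Dm" by (intro mult_left_mono) (use g in auto)
    thus ?thesis by (simp add: w_eq[OF that])
  qed
  have wpos: "w r > 0" if "r \<in> {-H..0}" for r
    using wlow[OF that] g cpos by (smt (verit) mult_pos_pos)
  define q0 where "q0 = c_low / (g * Dm)"
  define q1 where "q1 = c_up / (g * c_low)"
  have q0: "q0 > 0" and q1: "q1 > 0" using cpos g Dm by (auto simp: q0_def q1_def)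
  have qb: "q0 * w r \<le> rho r \<and> rho r \<le> q1 * w r" if r: "r \<in> {-H..0}" for r
  proof
    have "q0 * w r \<le> q0 * (g * Dm)" by (intro mult_left_mono wup r) (use q0 in simp)
    also have "\<dots> = c_low" using g Dm by (simp add: q0_def)
    also have "\<dots> \<le> rho r" using rho_bounds r by auto
    finally show "q0 * w r \<le> rho r" .
    have "rho r \<le> c_up" using rho_bounds r by auto
    also have "\<dots> = q1 * (g * c_low)" using g cpos by (simp add: q1_def)
    also have "\<dots> \<le> q1 * w r" by (intro mult_left_mono wlow r) (use q1 in simp)
    finally show "rho r \<le> q1 * w r" .
  qed
  have cf: "continuous_on {-H..0} (f n)" if "n \<ge> 1" for n
    using eig that by (simp add: SL_eigen_def)
  have ortho: "integral {-H..0} (\<lambda>r. f n r * f m r * w r) = (if n = m then 1 else 0)"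
    if "n \<ge> 1" "m \<ge> 1" for n m
  proof -
    have "(LINT r:{-H..0}|lborel. f n r * f m r * w r) = (if n = m then 1 else 0)"
      using onb that unfolding ONB_weighted_def w_def by auto
    moreover have "(LINT r:{-H..0}|lborel. f n r * f m r * w r) = integral {-H..0} (\<lambda>r. f n r * f m r * w r)"
      by (rule LINT_cont) (intro continuous_intros cf that cw)
    ultimately show ?thesis by simp
  qed
  interpret L: sl_setting H rho w f q0 q1
  proof (unfold_locales)
    show "\<And>n. 1 \<le> n \<Longrightarrow> continuous_on {-H..0} (f n)" by (rule cf)
    show "continuous_on {-H..0} rho" by (rule crho)
    show "continuous_on {-H..0} w" by (rule cw)
    show "\<And>r. r \<in> {-H..0} \<Longrightarrow> 0 < w r" by (rule wpos)
    show "0 < q0" by (rule q0)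
    show "0 < q1" by (rule q1)
    show "\<And>r. r \<in> {-H..0} \<Longrightarrow> q0 * w r \<le> rho r \<and> rho r \<le> q1 * w r" by (rule qb)
    show "\<And>n m. 1 \<le> n \<Longrightarrow> 1 \<le> m \<Longrightarrow> integral {-H..0} (\<lambda>r. f n r * f m r * w r) = (if n = m then 1 else 0)"
      by (rule ortho)
  qed
  have Mmat_A: "Mmat H rho c f n m = c n * c m * L.A n m" if "n \<ge> 1" "m \<ge> 1" for n m
    unfolding Mmat_def L.A_def
    by (subst LINT_cont) (intro continuous_intros cf that crho, rule refl)
  have cc: "\<forall>n\<ge>1. 0 < c n \<and> c n \<le> c 1"
    using eig cdec by (auto simp: SL_eigen_def)
  have c1: "c 1 > 0" using cc by auto
  define D where "D = Dell c"
  define M where "M = D o\<^sub>L L.Aell o\<^sub>L D"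
  have Mop_eq: "Mop (Mmat H rho c f) u = Dop c (L.Aop (Dop c u))"
    and Msum: "\<forall>n\<ge>1. (\<lambda>m. Mmat H rho c f n m * u m) summable_on {1..}"
    if u: "u \<in> l2" for u
  proof -
    have Du: "Dop c u \<in> l2" by (rule Dop_l2[OF cc u])
    have u0: "u 0 = 0" using u by (simp add: l2_iff)
    have trm: "Mmat H rho c f n m * u m = c n * (L.A n m * Dop c u m)" if n: "n \<ge> 1" for n m
    proof (cases "m = 0")
      case True thus ?thesis using u0 by (simp add: Dop_def)
    next
      case False thus ?thesis using Mmat_A[OF n, of m] by (simp add: Dop_def)
    qed
    have absm: "summable (\<lambda>m. \<bar>Mmat H rho c f n m * u m\<bar>)" if n: "n \<ge> 1" for n
      unfolding trm[OF n] abs_mult[of "c n"]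
      by (intro summable_mult L.Aop_abs_summable[OF Du n])
    have z: "Mmat H rho c f n 0 * u 0 = 0" for n using u0 by simp
    show "\<forall>n\<ge>1. (\<lambda>m. Mmat H rho c f n m * u m) summable_on {1..}"
      using infsum_conv(1)[where f="\<lambda>m. Mmat H rho c f _ m * u m", OF z absm] by blast
    show "Mop (Mmat H rho c f) u = Dop c (L.Aop (Dop c u))"
    proof (rule ext)
      fix n
      show "Mop (Mmat H rho c f) u n = Dop c (L.Aop (Dop c u)) n"
      proof (cases "n = 0")
        case True thus ?thesis by (simp add: Mop_def Dop_def L.Aop_def)
      next
        case False
        hence n: "n \<ge> 1" by simp
        have "Mop (Mmat H rho c f) u n = (\<Sum>m. Mmat H rho c f n m * u m)"
          using False infsum_conv(2)[where f="\<lambda>m. Mmat H rho c f n m * u m", OF z absm[OF n]]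
          by (simp add: Mop_def)
        also have "\<dots> = (\<Sum>m. c n * (L.A n m * Dop c u m))" by (simp add: trm[OF n])
        also have "\<dots> = c n * (\<Sum>m. L.A n m * Dop c u m)"
          by (rule suminf_mult[OF L.Aop_summable[OF Du n]])
        finally show ?thesis using False by (simp add: Dop_def L.Aop_def)
      qed
    qed
  qed
  have elD: "el (D x) = Dop c (el x)" for x by (simp add: D_def el_Dell[OF cc c1])
  have M_apply: "el (M (mkell u)) = Mop (Mmat H rho c f) u" if u: "u \<in> l2" for u
    by (simp add: M_def elD L.el_Aell el_mkell u Mop_eq[OF u])
  have M_mk: "M x = mkell (Mop (Mmat H rho c f) (el x))" for x
    using M_apply[OF el_in[of x]] by (metis el_inverse)
  have Dsym: "inner (D x) y = inner x (D y)" for x y by (simp add: D_def Dell_sym[OF cc c1])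
  have Dnorm: "norm (D x) \<le> c 1 * norm x" for x unfolding D_def by (rule Dell_norm[OF cc c1])
  have MA: "inner (M x) y = inner (L.Aell (D x)) (D y)" for x y
    by (simp add: M_def Dsym)
  have Msym: "inner (M x) y = inner x (M y)" for x y
    by (simp add: MA L.Aell_sym) (simp add: M_def Dsym)
  have Mlow: "q0 * (norm (D x))^2 \<le> inner (M x) x" for x
    by (simp add: MA L.Aell_coer)
  have Mup: "inner (M x) x \<le> q1 * (norm (D x))^2" for x
  proof -
    have "inner (M x) x \<le> norm (L.Aell (D x)) * norm (D x)" unfolding MA by (rule norm_cauchy_schwarz)
    also have "\<dots> \<le> (q1 * norm (D x)) * norm (D x)" by (intro mult_right_mono L.Aell_norm) simp
    finally show ?thesis by (simp add: power2_eq_square mult_ac)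
  qed
  have Mnorm: "norm (M x) \<le> c 1 * q1 * norm (D x)" for x
  proof -
    have "norm (M x) = norm (D (L.Aell (D x)))" by (simp add: M_def)
    also have "\<dots> \<le> c 1 * norm (L.Aell (D x))" by (rule Dnorm)
    also have "\<dots> \<le> c 1 * (q1 * norm (D x))" by (intro mult_left_mono L.Aell_norm) (use c1 in simp)
    finally show ?thesis by (simp add: mult_ac)
  qed
  have Mpos: "oppos M"
    unfolding oppos_def opsym_def
  proof (intro conjI allI)
    fix x y show "inner (M x) y = inner x (M y)" by (rule Msym)
    show "0 \<le> inner (M x) x" using Mlow[of x] q0 by (smt (verit) mult_nonneg_nonneg zero_le_power2)
  qed
  obtain S where S: "oppos S" "S o\<^sub>L S = M" "\<forall>X. X o\<^sub>L M = M o\<^sub>L X \<longrightarrow> X o\<^sub>L S = S o\<^sub>L X"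
    using sqrt_exists[OF Mpos] by blast
  define C where "C = max (max 1 (c 1 * q1)) (max q1 (1/q0))"
  have C1: "C \<ge> 1" and Cc: "c 1 * q1 \<le> C" and Cq1: "q1 \<le> C" and Cq0: "1/q0 \<le> C"
    by (auto simp: C_def)
  have Cpos: "C > 0" using C1 by simp
  have iC0: "1/C \<le> q0" using Cq0 q0 Cpos by (simp add: field_simps)
  have iC1: "1/C \<le> 1" using C1 by simp
  have ndu: "norm (D (mkell u)) = l2norm (\<lambda>n. c n * u n)" if "u \<in> l2" for u
    by (simp add: D_def norm_Dell_eq[OF cc c1 that])
  have inner_l2: "l2inner (el x) (el y) = inner x y" for x y by (simp add: inner_ell_eq)
  show ?thesis
  proof (intro exI[of _ C] conjI)
    show "C > 0" by (rule Cpos)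
    show "\<forall>u\<in>l2. \<forall>n\<ge>1. (\<lambda>m. Mmat H rho c f n m * u m) summable_on {1..}"
      using Msum by blast
    show "bounded_linear_l2 (Mop (Mmat H rho c f))"
      unfolding bounded_linear_l2_def
    proof (intro conjI ballI allI exI)
      fix u assume u: "u \<in> l2"
      show "Mop (Mmat H rho c f) u \<in> l2" using M_apply[OF u] el_in by metis
    next
      fix u v a b assume u: "u \<in> l2" and v: "v \<in> l2"
      show "Mop (Mmat H rho c f) (\<lambda>n. a * u n + b * v n) = (\<lambda>n. a * Mop (Mmat H rho c f) u n + b * Mop (Mmat H rho c f) v n)"
        by (simp add: Mop_eq u v l2_lincomb Dop_lin L.Aop_lin Dop_l2[OF cc])
    next
      fix u assume u: "u \<in> l2"
      have "l2norm (Mop (Mmat H rho c f) u) = norm (M (mkell u))"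
        by (simp add: norm_ell_eq M_apply[OF u])
      also have "\<dots> \<le> norm M * norm (mkell u)" by (rule norm_blinfun)
      also have "\<dots> = norm M * l2norm u" by (simp add: norm_mkell u)
      finally show "l2norm (Mop (Mmat H rho c f) u) \<le> norm M * l2norm u" .
    qed
    show "\<forall>u\<in>l2. l2norm (Mop (Mmat H rho c f) u) \<le> C * l2norm (\<lambda>n. c n * u n)"
    proof
      fix u assume u: "u \<in> l2"
      have "l2norm (Mop (Mmat H rho c f) u) = norm (M (mkell u))"
        by (simp add: norm_ell_eq M_apply[OF u])
      also have "\<dots> \<le> c 1 * q1 * norm (D (mkell u))" by (rule Mnorm)
      also have "\<dots> \<le> C * norm (D (mkell u))" by (intro mult_right_mono Cc) simp
      finally show "l2norm (Mop (Mmat H rho c f) u) \<le> C * l2norm (\<lambda>n. c n * u n)" by (simp add: ndu u)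
    qed
    show "\<forall>u\<in>l2. \<forall>v\<in>l2. l2inner (Mop (Mmat H rho c f) u) v = l2inner u (Mop (Mmat H rho c f) v)"
    proof (intro ballI)
      fix u v assume u: "u \<in> l2" and v: "v \<in> l2"
      have "l2inner (Mop (Mmat H rho c f) u) v = inner (M (mkell u)) (mkell v)"
        using inner_l2[of "M (mkell u)" "mkell v"] by (simp add: M_apply[OF u] el_mkell v)
      also have "\<dots> = inner (mkell u) (M (mkell v))" by (rule Msym)
      also have "\<dots> = l2inner u (Mop (Mmat H rho c f) v)"
        using inner_l2[of "mkell u" "M (mkell v)"] by (simp add: M_apply[OF v] el_mkell u)
      finally show "l2inner (Mop (Mmat H rho c f) u) v = l2inner u (Mop (Mmat H rho c f) v)" .
    qed
    show "\<forall>u\<in>l2. (1 / C) * (l2norm (\<lambda>n. c n * u n))\<^sup>2 \<le> l2inner (Mop (Mmat H rho c f) u) u"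
    proof
      fix u assume u: "u \<in> l2"
      have "(1 / C) * (l2norm (\<lambda>n. c n * u n))\<^sup>2 = (1/C) * (norm (D (mkell u)))^2" by (simp add: ndu u)
      also have "\<dots> \<le> q0 * (norm (D (mkell u)))^2" by (intro mult_right_mono iC0) simp
      also have "\<dots> \<le> inner (M (mkell u)) (mkell u)" by (rule Mlow)
      also have "\<dots> = l2inner (Mop (Mmat H rho c f) u) u"
        using inner_l2[of "M (mkell u)" "mkell u"] by (simp add: M_apply[OF u] el_mkell u)
      finally show "(1 / C) * (l2norm (\<lambda>n. c n * u n))\<^sup>2 \<le> l2inner (Mop (Mmat H rho c f) u) u" .
    qed
    show "\<exists>S. positive_l2 S \<and> (\<forall>u\<in>l2. S (S u) = Mop (Mmat H rho c f) u) \<and>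
         (\<forall>S'. positive_l2 S' \<and> (\<forall>u\<in>l2. S' (S' u) = Mop (Mmat H rho c f) u)
               \<longrightarrow> (\<forall>u\<in>l2. S' u = S u)) \<and>
         (\<forall>u\<in>l2. (1 / C) * l2norm (\<lambda>n. c n * u n) \<le> l2norm (S u) \<and>
                  l2norm (S u) \<le> C * l2norm (\<lambda>n. c n * u n))"
    proof (intro exI[of _ "\<lambda>u. el (S (mkell u))"] conjI)
      let ?S = "\<lambda>u. el (S (mkell u))"
      have Ssym: "inner (S x) y = inner x (S y)" for x y using S(1) by (simp add: oppos_def opsym_def)
      have Snn: "0 \<le> inner (S x) x" for x using S(1) by (simp add: oppos_def)
      have SS: "S (S x) = M x" for x using arg_cong[OF S(2), of "\<lambda>F. blinfun_apply F x"] by simp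
      show "positive_l2 ?S"
        unfolding positive_l2_def bounded_linear_l2_def
      proof (intro conjI ballI allI exI)
        fix u assume "u \<in> l2" show "?S u \<in> l2" by (rule el_in)
      next
        fix u v a b assume u: "u \<in> l2" and v: "v \<in> l2"
        have "mkell (\<lambda>n. a * u n + b * v n) = a *\<^sub>R mkell u + b *\<^sub>R mkell v"
          by (rule ell_eqI) (simp add: el_mkell u v l2_lincomb el_add el_scale)
        thus "?S (\<lambda>n. a * u n + b * v n) = (\<lambda>n. a * ?S u n + b * ?S v n)"
          by (simp add: blinfun.bilinear_simps el_add el_scale)
      next
        fix u assume u: "u \<in> l2"
        have "l2norm (?S u) = norm (S (mkell u))" by (simp add: norm_ell_eq)
        also have "\<dots> \<le> norm S * norm (mkell u)" by (rule norm_blinfun)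
        also have "\<dots> = norm S * l2norm u" by (simp add: norm_mkell u)
        finally show "l2norm (?S u) \<le> norm S * l2norm u" .
      next
        fix u v assume u: "u \<in> l2" and v: "v \<in> l2"
        show "l2inner (?S u) v = l2inner u (?S v)"
          using Ssym[of "mkell u" "mkell v"] by (simp add: inner_ell_eq el_mkell u v)
      next
        fix u assume u: "u \<in> l2"
        show "0 \<le> l2inner (?S u) u" using Snn[of "mkell u"] by (simp add: inner_ell_eq el_mkell u)
      qed
      show "\<forall>u\<in>l2. ?S (?S u) = Mop (Mmat H rho c f) u"
      proof
        fix u assume u: "u \<in> l2"
        have "?S (?S u) = el (S (S (mkell u)))" by (simp add: el_inverse)
        also have "\<dots> = el (M (mkell u))" by (simp add: SS)
        also have "\<dots> = Mop (Mmat H rho c f) u" by (rule M_apply[OF u])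
        finally show "?S (?S u) = Mop (Mmat H rho c f) u" .
      qed
      show "\<forall>S'. positive_l2 S' \<and> (\<forall>u\<in>l2. S' (S' u) = Mop (Mmat H rho c f) u) \<longrightarrow> (\<forall>u\<in>l2. S' u = ?S u)"
      proof (intro allI impI ballI)
        fix S' u assume H': "positive_l2 S' \<and> (\<forall>u\<in>l2. S' (S' u) = Mop (Mmat H rho c f) u)" and u: "u \<in> l2"
        have P1: "\<And>u. u \<in> l2 \<Longrightarrow> S' u \<in> l2"
          and P2: "\<And>u v a b. u \<in> l2 \<Longrightarrow> v \<in> l2 \<Longrightarrow> S' (\<lambda>n. a * u n + b * v n) = (\<lambda>n. a * S' u n + b * S' v n)"
          and P3: "\<exists>B. \<forall>u\<in>l2. l2norm (S' u) \<le> B * l2norm u"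
          and P4: "\<And>u v. u \<in> l2 \<Longrightarrow> v \<in> l2 \<Longrightarrow> l2inner (S' u) v = l2inner u (S' v)"
          and P5: "\<And>u. u \<in> l2 \<Longrightarrow> 0 \<le> l2inner (S' u) u"
          and P6: "\<And>u. u \<in> l2 \<Longrightarrow> S' (S' u) = Mop (Mmat H rho c f) u"
      proof -
        have pl: "positive_l2 S'" and Q6: "\<forall>u\<in>l2. S' (S' u) = Mop (Mmat H rho c f) u"
          using H' by simp_all
        have bl2: "bounded_linear_l2 S'" and Q4: "\<forall>u\<in>l2. \<forall>v\<in>l2. l2inner (S' u) v = l2inner u (S' v)"
          and Q5: "\<forall>u\<in>l2. l2inner (S' u) u \<ge> 0"
          using pl unfolding positive_l2_def by blast+
        have Q1: "\<forall>u\<in>l2. S' u \<in> l2"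
          and Q2: "\<forall>u\<in>l2. \<forall>v\<in>l2. \<forall>a b. S' (\<lambda>n. a * u n + b * v n) = (\<lambda>n. a * S' u n + b * S' v n)"
          and Q3: "\<exists>B. \<forall>u\<in>l2. l2norm (S' u) \<le> B * l2norm u"
          using bl2 unfolding bounded_linear_l2_def by blast+
        show "\<And>u. u \<in> l2 \<Longrightarrow> S' u \<in> l2" using Q1 by simp
        show "\<And>u v a b. u \<in> l2 \<Longrightarrow> v \<in> l2 \<Longrightarrow> S' (\<lambda>n. a * u n + b * v n) = (\<lambda>n. a * S' u n + b * S' v n)"
          using Q2 by simp
        show "\<exists>B. \<forall>u\<in>l2. l2norm (S' u) \<le> B * l2norm u" by (rule Q3)
        show "\<And>u v. u \<in> l2 \<Longrightarrow> v \<in> l2 \<Longrightarrow> l2inner (S' u) v = l2inner u (S' v)" using Q4 by simp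
        show "\<And>u. u \<in> l2 \<Longrightarrow> 0 \<le> l2inner (S' u) u" using Q5 by simp
        show "\<And>u. u \<in> l2 \<Longrightarrow> S' (S' u) = Mop (Mmat H rho c f) u" using Q6 by simp
      qed
        obtain B where B: "\<And>u. u \<in> l2 \<Longrightarrow> l2norm (S' u) \<le> B * l2norm u" using P3 by blast
        have bl: "bounded_linear (\<lambda>x. mkell (S' (el x)))"
          by (rule mk_bl[where K=B, OF P1 P2 B])
        define Sb where "Sb = Blinfun (\<lambda>x. mkell (S' (el x)))"
        have Sb_app: "blinfun_apply Sb x = mkell (S' (el x))" for x
          by (simp add: Sb_def bounded_linear_Blinfun_apply[OF bl])
        have elSb: "el (blinfun_apply Sb x) = S' (el x)" for x
          by (simp add: Sb_app el_mkell P1 el_in)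
        have Sbpos: "oppos Sb"
          unfolding oppos_def opsym_def
        proof (intro conjI allI)
          fix x y
          show "inner (Sb x) y = inner x (Sb y)" by (simp add: inner_ell_eq elSb P4 el_in)
          show "0 \<le> inner (Sb x) x" by (simp add: inner_ell_eq elSb P5 el_in)
        qed
        have SbSb: "Sb o\<^sub>L Sb = S o\<^sub>L S"
        proof (rule blinfun_eqI, rule ell_eqI)
          fix x
          have "el ((Sb o\<^sub>L Sb) x) = S' (S' (el x))" by (simp add: elSb)
          also have "\<dots> = Mop (Mmat H rho c f) (el x)" by (rule P6[OF el_in])
          also have "\<dots> = el (M x)" using M_apply[OF el_in[of x]] by (simp add: el_inverse)
          also have "\<dots> = el ((S o\<^sub>L S) x)" by (simp add: S(2))
          finally show "el ((Sb o\<^sub>L Sb) x) = el ((S o\<^sub>L S) x)" .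
        qed
        have "Sb = S" by (rule sqrt_unique[OF S(1) Sbpos SbSb]) (simp only: S(2), rule S(3))
        hence "S' (el (mkell u)) = el (S (mkell u))" using elSb[of "mkell u"] by simp
        thus "S' u = ?S u" by (simp add: el_mkell u)
      qed
      show "\<forall>u\<in>l2. (1 / C) * l2norm (\<lambda>n. c n * u n) \<le> l2norm (?S u) \<and>
                  l2norm (?S u) \<le> C * l2norm (\<lambda>n. c n * u n)"
      proof (intro ballI conjI)
        fix u assume u: "u \<in> l2"
        define x where "x = mkell u"
        have nS: "l2norm (?S u) = norm (S x)" by (simp add: norm_ell_eq x_def)
        have sq: "(norm (S x))^2 = inner (M x) x"
        proof -
          have "(norm (S x))^2 = inner (S x) (S x)" by (rule power2_norm_eq_inner)
          also have "\<dots> = inner x (S (S x))" by (rule Ssym)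
          also have "\<dots> = inner (M x) x" by (simp add: SS inner_commute)
          finally show ?thesis .
        qed
        define d where "d = norm (D x)"
        have dd: "l2norm (\<lambda>n. c n * u n) = d" by (simp add: ndu u d_def x_def)
        have d0: "d \<ge> 0" by (simp add: d_def)
        have iCsq: "(1/C)^2 \<le> q0"
        proof -
          have "(1/C)^2 = (1/C) * (1/C)" by (simp add: power2_eq_square)
          also have "\<dots> \<le> 1 * (1/C)" by (intro mult_right_mono iC1) (use Cpos in simp)
          also have "\<dots> \<le> q0" using iC0 by simp
          finally show ?thesis .
        qed
        have "((1/C) * d)^2 \<le> (norm (S x))^2"
        proof -
          have "((1/C) * d)^2 = (1/C)^2 * d^2" by (rule power_mult_distrib)
          also have "\<dots> \<le> q0 * d^2" by (intro mult_right_mono iCsq) simp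
          also have "\<dots> \<le> inner (M x) x" using Mlow[of x] by (simp add: d_def)
          finally show ?thesis by (simp add: sq)
        qed
        hence "(1/C) * d \<le> norm (S x)" by (rule power2_le_imp_le) simp
        thus "(1 / C) * l2norm (\<lambda>n. c n * u n) \<le> l2norm (?S u)" by (simp add: nS dd)
        have Csq: "q1 \<le> C^2"
        proof -
          have "C \<le> C * C" using C1 by simp
          thus ?thesis using Cq1 by (simp add: power2_eq_square)
        qed
        have "(norm (S x))^2 \<le> (C * d)^2"
        proof -
          have "(norm (S x))^2 \<le> q1 * d^2" unfolding sq d_def by (rule Mup)
          also have "\<dots> \<le> C^2 * d^2" by (intro mult_right_mono Csq) simp
          finally show ?thesis by (simp add: power_mult_distrib)
        qed
        hence "norm (S x) \<le> C * d" by (rule power2_le_imp_le) (use Cpos d0 in simp)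
        thus "l2norm (?S u) \<le> C * l2norm (\<lambda>n. c n * u n)" by (simp add: nS dd)
      qed
    qed
    show "\<forall>K. (\<forall>r\<in>{-H..0}. Nsq g rho r = K) \<longrightarrow>
         (\<forall>n\<ge>1. \<forall>m\<ge>1. Mmat H rho c f n m = (if n = m then (c n)\<^sup>2 / K else 0))"
    proof (rule allI, rule impI)
      fix K assume K: "\<forall>r\<in>{-H..0}. Nsq g rho r = K"
      have z: "0 \<in> {-H..0}" using H by simp
      have NK: "Nsq g rho r = K" if "r \<in> {-H..0}" for r using K that by blast
      have "w 0 = rho 0 * K" unfolding w_def by (simp only: NK[OF z])
      hence "0 < rho 0 * K" using wpos[OF z] by simp
      hence Kpos: "K > 0" using rho_pos[OF z] by (simp add: zero_less_mult_iff)
      show "\<forall>n\<ge>1. \<forall>m\<ge>1. Mmat H rho c f n m = (if n = m then (c n)\<^sup>2 / K else 0)"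
      proof (intro allI impI)
        fix n m :: nat assume n: "n \<ge> 1" and m: "m \<ge> 1"
        have "integral {-H..0} (\<lambda>r. f n r * f m r * w r) = integral {-H..0} (\<lambda>r. K * (f n r * f m r * rho r))"
        proof (rule integral_cong)
          fix r assume r: "r \<in> {-H..0}"
          show "f n r * f m r * w r = K * (f n r * f m r * rho r)"
            unfolding w_def NK[OF r] by (simp only: mult_ac)
        qed
        also have "\<dots> = K * L.A n m"
          unfolding L.A_def using integral_cmul[where c=K and f="\<lambda>r. f n r * f m r * rho r" and S="{-H..0}"] by simp
        finally have KA: "K * L.A n m = (if n = m then 1 else 0)" using ortho[OF n m] by simp
        show "Mmat H rho c f n m = (if n = m then (c n)\<^sup>2 / K else 0)"
        proof (cases "n = m")
          case True
          hence "L.A n m = 1 / K" using KA Kpos by (simp add: field_simps)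
          moreover have "Mmat H rho c f n m = c n * c m * L.A n m" by (rule Mmat_A[OF n m])
          ultimately show ?thesis using True by (simp add: power2_eq_square)
        next
          case False
          hence "L.A n m = 0" using KA Kpos by simp
          thus ?thesis using False by (simp add: Mmat_A[OF n m])
        qed
      qed
    qed
  qed
qed


end
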